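(* For every $\beta\ge 0$ and every $\vartheta_0\in\mathscr S'$, a solution in $\mathscr S'$ (of the Dirichlet problem if $\beta<1$, Robin problem if $\beta=1$, Neumann problem if $\beta>1$) with initial condition $\vartheta_0$, in the sense defined in the context, exists and is unique in $\mathcal C([0,\infty),\mathscr S')$.
   Context: Fix $\alpha,\alpha_L,\alpha_R,\vartheta_L,\vartheta_R>0$. For $\beta\ge 0$ let $\mathcal L=\mathcal L_\beta$ be the nonnegative self-adjoint operator on $L^2([0,1])$ acting as $\mathcal LF=-\alpha F''$ with domain: if $\beta<1$, $\{F\in\mathcal W^{1,2}_0: F''\in L^2\}$; if $\beta=1$, $\{F\in\mathcal W^{2,2}: \alpha F'(0)=\alpha_L F(0),\ -\alpha F'(1)=\alpha_R F(1)\}$; if $\beta>1$, $\{F\in\mathcal W^{2,2}: F'(0)=F'(1)=0\}$. Let $0\le\lambda_0\le\lambda_1\le\dots$ be its eigenvalues with orthonormal eigenbasis $\{\psi_n\}$. Let $\mathscr S=\{F\in L^2([0,1]): \|F\|_k^2:=\sum_n(1+\lambda_n)^k\langle F,\psi_n\rangle^2<\infty\ \forall k\in\mathbb Z\}$ with the topology of these norms (a nuclear Fréchet space of $\mathcal C^\infty([0,1])$ functions), $\mathscr S'$ its topological dual with the strong topology, and $\langle G,g\rangle:=g(G)$ for $G\in\mathscr S$, $g\in\mathscr S'$. Let $\mathcal A:=-\mathcal L$ restricted to $\mathscr S$; it maps $\mathscr S$ continuously into $\mathscr S$ and $\mathcal AG=\alpha G''$. Let $h=h_{\vartheta_L,\vartheta_R}\in\mathcal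 C^\infty([0,1])$ be: $h(u)=\vartheta_L+(\vartheta_R-\vartheta_L)u$ if $\beta<1$; $h(u)=\vartheta_L+(\vartheta_R-\vartheta_L)\frac{\alpha/\alpha_L+u}{\alpha/\alpha_L+1+\alpha/\alpha_R}$ if $\beta=1$; $h(u)\equiv\frac{\alpha_L\vartheta_L+\alpha_R\vartheta_R}{\alpha_L+\alpha_R}$ if $\beta>1$; and $h\,du\in\mathscr S'$ the distribution $G\mapsto\int_0^1G(u)h(u)du$. A family $\{\vartheta(t):t\ge 0\}\subset\mathscr S'$ is a solution in $\mathscr S'$ with initial condition $\vartheta_0\in\mathscr S'$ if there is $\{g(t):t\ge0\}\subset\mathscr S'$ such that for all $G\in\mathscr S$ and $t\ge 0$: $\langle G,\vartheta(t)\rangle=\langle G,h\,du\rangle+\langle G,g(t)\rangle$ and $\langle G,g(t)\rangle=\langle G,\vartheta_0-h\,du\rangle+\int_0^t\langle\mathcal AG,g(s)\rangle ds$. $\mathcal C([0,\infty),\mathscr S')$ denotes the continuous $\mathscr S'$-valued paths. *)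

theory Defs
  imports "HOL-Analysis.Analysis"
begin

definition sq_int :: "(real \<Rightarrow> real) set" where
  "sq_int = {F. set_borel_measurable lborel {0..1} F
               \<and> set_integrable lborel {0..1} (\<lambda>u. (F u)^2)}"

definition L2inner :: "(real \<Rightarrow> real) \<Rightarrow> (real \<Rightarrow> real) \<Rightarrow> real" where
  "L2inner F G = (LINT u:{0..1}|lborel. F u * G u)"

definition is_eigenfunction ::
  "real \<Rightarrow> real \<Rightarrow> real \<Rightarrow> real \<Rightarrow> real \<Rightarrow> (real \<Rightarrow> real) \<Rightarrow> bool" where
  "is_eigenfunction \<beta> \<alpha> \<alpha>L \<alpha>R lam \<psi> \<longleftrightarrow>
     (\<exists>\<psi>' \<psi>''.
        (\<forall>u\<in>{0..1}. (\<psi> has_real_derivative \<psi>' u) (at u within {0..1})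
                   \<and> (\<psi>' has_real_derivative \<psi>'' u) (at u within {0..1})
                   \<and> - \<alpha> * \<psi>'' u = lam * \<psi> u)
      \<and> (if \<beta> < 1 then \<psi> 0 = 0 \<and> \<psi> 1 = 0
         else if \<beta> = 1 then \<alpha> * \<psi>' 0 = \<alpha>L * \<psi> 0 \<and> - \<alpha> * \<psi>' 1 = \<alpha>R * \<psi> 1
         else \<psi>' 0 = 0 \<and> \<psi>' 1 = 0))"

definition is_eigenbasis ::
  "real \<Rightarrow> real \<Rightarrow> real \<Rightarrow> real \<Rightarrow> (nat \<Rightarrow> real \<Rightarrow> real) \<Rightarrow> (nat \<Rightarrow> real) \<Rightarrow> bool" where
  "is_eigenbasis \<beta> \<alpha> \<alpha>L \<alpha>R \<psi> lam \<longleftrightarrow>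
     mono lam
   \<and> (\<forall>n. \<psi> n \<in> sq_int \<and> is_eigenfunction \<beta> \<alpha> \<alpha>L \<alpha>R (lam n) (\<psi> n))
   \<and> (\<forall>n m. L2inner (\<psi> n) (\<psi> m) = (if n = m then 1 else 0))
   \<and> (\<forall>F\<in>sq_int. (\<forall>n. L2inner F (\<psi> n) = 0) \<longrightarrow> (AE u in lborel. u \<in> {0..1} \<longrightarrow> F u = 0))"

definition Snorm_sq :: "(nat \<Rightarrow> real \<Rightarrow> real) \<Rightarrow> (nat \<Rightarrow> real) \<Rightarrow> int \<Rightarrow> (real \<Rightarrow> real) \<Rightarrow> real" where
  "Snorm_sq \<psi> lam k F = (\<Sum>n. (1 + lam n) powi k * (L2inner F (\<psi> n))^2)"

definition Sspace :: "(nat \<Rightarrow> real \<Rightarrow> real) \<Rightarrow> (nat \<Rightarrow> real) \<Rightarrow> (real \<Rightarrow> real) set" where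
  "Sspace \<psi> lam = {F \<in> sq_int. \<forall>k::int. summable (\<lambda>n. (1 + lam n) powi k * (L2inner F (\<psi> n))^2)}"

text \<open>Topological dual S': continuous linear functionals on S (continuity w.r.t. the
  locally convex topology of the increasing family of norms ||.||_k), represented
  extensionally (value 0 outside S).  Pairing: <G,g> = g G.\<close>
definition Sdual :: "(nat \<Rightarrow> real \<Rightarrow> real) \<Rightarrow> (nat \<Rightarrow> real) \<Rightarrow> ((real \<Rightarrow> real) \<Rightarrow> real) set" where
  "Sdual \<psi> lam = {g. (\<forall>F\<in>Sspace \<psi> lam. \<forall>G\<in>Sspace \<psi> lam. \<forall>a b.
                         g (\<lambda>u. a * F u + b * G u) = a * g F + b * g G)
                  \<and> (\<exists>k::int. \<exists>C. \<forall>F\<in>Sspace \<psi> lam. \<bar>g F\<bar> \<le> C * sqrt (Snorm_sq \<psi> lam k F))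
                  \<and> (\<forall>F. F \<notin> Sspace \<psi> lam \<longrightarrow> g F = 0)}"

definition S_bounded :: "(nat \<Rightarrow> real \<Rightarrow> real) \<Rightarrow> (nat \<Rightarrow> real) \<Rightarrow> (real \<Rightarrow> real) set \<Rightarrow> bool" where
  "S_bounded \<psi> lam B \<longleftrightarrow> B \<subseteq> Sspace \<psi> lam \<and> (\<forall>k::int. \<exists>M. \<forall>F\<in>B. Snorm_sq \<psi> lam k F \<le> M)"

text \<open>Paths in C([0,oo), S') where S' carries the strong topology
  (uniform convergence on bounded subsets of S).\<close>
definition strong_cont_path ::
  "(nat \<Rightarrow> real \<Rightarrow> real) \<Rightarrow> (nat \<Rightarrow> real) \<Rightarrow> (real \<Rightarrow> (real \<Rightarrow> real) \<Rightarrow> real) \<Rightarrow> bool" where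
  "strong_cont_path \<psi> lam \<theta> \<longleftrightarrow>
     (\<forall>t\<ge>0. \<theta> t \<in> Sdual \<psi> lam)
   \<and> (\<forall>B. S_bounded \<psi> lam B \<longrightarrow>
        (\<forall>t0\<ge>0. \<forall>\<epsilon>>0. \<exists>\<delta>>0. \<forall>t\<ge>0. \<bar>t - t0\<bar> < \<delta> \<longrightarrow>
            (\<forall>F\<in>B. \<bar>\<theta> t F - \<theta> t0 F\<bar> < \<epsilon>)))"

text \<open>The operator A = -L restricted to S (via the spectral representation of L).\<close>
definition opA :: "(nat \<Rightarrow> real \<Rightarrow> real) \<Rightarrow> (nat \<Rightarrow> real) \<Rightarrow> (real \<Rightarrow> real) \<Rightarrow> (real \<Rightarrow> real)" where
  "opA \<psi> lam G = (SOME H. H \<in> Sspace \<psi> lam \<and> (\<forall>n. L2inner H (\<psi> n) = - lam n * L2inner G (\<psi> n)))"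

definition hprof :: "real \<Rightarrow> real \<Rightarrow> real \<Rightarrow> real \<Rightarrow> real \<Rightarrow> real \<Rightarrow> real \<Rightarrow> real" where
  "hprof \<beta> \<alpha> \<alpha>L \<alpha>R thL thR u =
     (if \<beta> < 1 then thL + (thR - thL) * u
      else if \<beta> = 1 then thL + (thR - thL) * ((\<alpha> / \<alpha>L + u) / (\<alpha> / \<alpha>L + 1 + \<alpha> / \<alpha>R))
      else (\<alpha>L * thL + \<alpha>R * thR) / (\<alpha>L + \<alpha>R))"

definition hdu :: "real \<Rightarrow> real \<Rightarrow> real \<Rightarrow> real \<Rightarrow> real \<Rightarrow> real \<Rightarrow> (real \<Rightarrow> real) \<Rightarrow> real" where
  "hdu \<beta> \<alpha> \<alpha>L \<alpha>R thL thR G = (LINT u:{0..1}|lborel. G u * hprof \<beta> \<alpha> \<alpha>L \<alpha>R thL thR u)"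

definition is_solution ::
  "real \<Rightarrow> real \<Rightarrow> real \<Rightarrow> real \<Rightarrow> real \<Rightarrow> real \<Rightarrow> (nat \<Rightarrow> real \<Rightarrow> real) \<Rightarrow> (nat \<Rightarrow> real)
   \<Rightarrow> ((real \<Rightarrow> real) \<Rightarrow> real) \<Rightarrow> (real \<Rightarrow> (real \<Rightarrow> real) \<Rightarrow> real) \<Rightarrow> bool" where
  "is_solution \<beta> \<alpha> \<alpha>L \<alpha>R thL thR \<psi> lam \<theta>0 \<theta> \<longleftrightarrow>
     (\<forall>t\<ge>0. \<theta> t \<in> Sdual \<psi> lam)
   \<and> (\<exists>g. (\<forall>t\<ge>0. g t \<in> Sdual \<psi> lam)
        \<and> (\<forall>G\<in>Sspace \<psi> lam. \<forall>t\<ge>0.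
              \<theta> t G = hdu \<beta> \<alpha> \<alpha>L \<alpha>R thL thR G + g t G
            \<and> (\<lambda>s. g s (opA \<psi> lam G)) integrable_on {0..t}
            \<and> g t G = \<theta>0 G - hdu \<beta> \<alpha> \<alpha>L \<alpha>R thL thR G
                       + integral {0..t} (\<lambda>s. g s (opA \<psi> lam G))))"

end

theory Submission
  imports Defs
begin


abbreviation Mi :: "real measure" where "Mi \<equiv> restrict_space lborel {0..1::real}"

lemma Mi_sets[simp]: "{0..1::real} \<inter> space lborel \<in> sets lborel" by simp

lemma fm_Mi: "finite_measure Mi"
  by (rule finite_measureI) (simp add: emeasure_restrict_space space_restrict_space)

interpretation Mi: finite_measure Mi by (rule fm_Mi)

lemma sq_int_iff: "F \<in> sq_int \<longleftrightarrow> F \<in> borel_measurable Mi \<and> integrable Mi (\<lambda>u. (F u)^2)"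
  unfolding sq_int_def set_borel_measurable_def set_integrable_def
  by (simp add: borel_measurable_restrict_space_iff integrable_restrict_space)

lemma L2inner_Mi: "L2inner F G = integral\<^sup>L Mi (\<lambda>u. F u * G u)"
  unfolding L2inner_def set_lebesgue_integral_def
  by (simp add: integral_restrict_space)

lemma hdu_Mi: "hdu \<beta> \<alpha> \<alpha>L \<alpha>R thL thR G = integral\<^sup>L Mi (\<lambda>u. G u * hprof \<beta> \<alpha> \<alpha>L \<alpha>R thL thR u)"
  unfolding hdu_def set_lebesgue_integral_def
  by (simp add: integral_restrict_space)

lemma sq_int_meas: "F \<in> sq_int \<Longrightarrow> F \<in> borel_measurable Mi"
  by (simp add: sq_int_iff)

lemma sq_int_sq: "F \<in> sq_int \<Longrightarrow> integrable Mi (\<lambda>u. (F u)^2)"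
  by (simp add: sq_int_iff)

lemma sq_int_mult:
  assumes "F \<in> sq_int" "G \<in> sq_int"
  shows "integrable Mi (\<lambda>u. F u * G u)"
proof (rule Bochner_Integration.integrable_bound[where f="\<lambda>u. (F u)^2 + (G u)^2"])
  show "integrable Mi (\<lambda>u. (F u)^2 + (G u)^2)"
    using assms by (simp add: sq_int_sq)
  show "(\<lambda>u. F u * G u) \<in> borel_measurable Mi"
    using assms by (intro borel_measurable_times sq_int_meas)
  show "AE x in Mi. norm (F x * G x) \<le> norm ((F x)^2 + (G x)^2)"
  proof (intro AE_I2)
    fix x
    have "\<bar>F x * G x\<bar> \<le> (F x)^2 + (G x)^2"
    proof -
      have "\<bar>F x * G x\<bar> = \<bar>F x\<bar> * \<bar>G x\<bar>" by (simp add: abs_mult)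
      also have "\<dots> \<le> \<bar>F x\<bar>^2 + \<bar>G x\<bar>^2"
        using sum_squares_bound[of "\<bar>F x\<bar>" "\<bar>G x\<bar>"] mult_nonneg_nonneg[of "\<bar>F x\<bar>" "\<bar>G x\<bar>"]
        by (simp del: mult_nonneg_nonneg)
      finally show ?thesis by simp
    qed
    then show "norm (F x * G x) \<le> norm ((F x)^2 + (G x)^2)" by simp
  qed
qed

lemma sq_int_lin:
  assumes "F \<in> sq_int" "G \<in> sq_int"
  shows "(\<lambda>u. a * F u + b * G u) \<in> sq_int"
proof -
  have "integrable Mi (\<lambda>u. a^2 * (F u)^2 + b^2 * (G u)^2 + 2*a*b * (F u * G u))"
    using assms by (intro Bochner_Integration.integrable_add Bochner_Integration.integrable_mult_right sq_int_mult sq_int_sq)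
  moreover have "(\<lambda>u. (a * F u + b * G u)^2) = (\<lambda>u. a^2 * (F u)^2 + b^2 * (G u)^2 + 2*a*b * (F u * G u))"
    by (auto simp: power2_eq_square algebra_simps)
  moreover have "(\<lambda>u. a * F u + b * G u) \<in> borel_measurable Mi"
    using assms by (intro borel_measurable_add borel_measurable_times borel_measurable_const sq_int_meas)
  ultimately show ?thesis using assms by (simp add: sq_int_iff)
qed

lemma L2inner_lin:
  assumes "F \<in> sq_int" "G \<in> sq_int" "H \<in> sq_int"
  shows "L2inner (\<lambda>u. a * F u + b * G u) H = a * L2inner F H + b * L2inner G H"
proof -
  have "(\<lambda>u. (a * F u + b * G u) * H u) = (\<lambda>u. a * (F u * H u) + b * (G u * H u))"
    by (auto simp: algebra_simps)
  then show ?thesis unfolding L2inner_Mi using assms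
    by (simp add: sq_int_mult)
qed

lemma L2inner_sym: "L2inner F G = L2inner G F"
  unfolding L2inner_Mi by (simp add: mult.commute)

lemma L2inner_lin2:
  assumes "F \<in> sq_int" "G \<in> sq_int" "H \<in> sq_int"
  shows "L2inner H (\<lambda>u. a * F u + b * G u) = a * L2inner H F + b * L2inner H G"
  using L2inner_lin[OF assms] by (simp add: L2inner_sym)

lemma L2inner_nonneg: "L2inner F F \<ge> 0"
  unfolding L2inner_Mi by (rule integral_nonneg_AE) auto

lemma sq_int_zero: "(\<lambda>u. 0) \<in> sq_int"
  by (simp add: sq_int_iff)

lemma sq_int_scale: "F \<in> sq_int \<Longrightarrow> (\<lambda>u. a * F u) \<in> sq_int"
  using sq_int_lin[of F F a 0] by simp

lemma sq_int_add: "F \<in> sq_int \<Longrightarrow> G \<in> sq_int \<Longrightarrow> (\<lambda>u. F u + G u) \<in> sq_int"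
  using sq_int_lin[of F G 1 1] by simp

lemma sq_int_diff: "F \<in> sq_int \<Longrightarrow> G \<in> sq_int \<Longrightarrow> (\<lambda>u. F u - G u) \<in> sq_int"
  using sq_int_lin[of F G 1 "-1"] by simp

lemma sq_int_sum: "(\<And>n. n \<in> A \<Longrightarrow> f n \<in> sq_int) \<Longrightarrow> (\<lambda>u. \<Sum>n\<in>A. c n * f n u) \<in> sq_int"
proof (induction A rule: infinite_finite_induct)
  case (infinite A) then show ?case by (simp add: sq_int_zero)
next
  case empty then show ?case by (simp add: sq_int_zero)
next
  case (insert x F)
  then show ?case using sq_int_lin[of "\<lambda>u. \<Sum>n\<in>F. c n * f n u" "f x" 1 "c x"]
    by (simp add: add.commute)
qed

lemma L2inner_sum:
  assumes "\<And>n. n \<in> A \<Longrightarrow> f n \<in> sq_int" "H \<in> sq_int"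
  shows "L2inner (\<lambda>u. \<Sum>n\<in>A. c n * f n u) H = (\<Sum>n\<in>A. c n * L2inner (f n) H)"
  using assms
proof (induction A rule: infinite_finite_induct)
  case (infinite A) then show ?case by (simp add: L2inner_Mi)
next
  case empty then show ?case by (simp add: L2inner_Mi)
next
  case (insert x F)
  have "L2inner (\<lambda>u. \<Sum>n\<in>insert x F. c n * f n u) H = L2inner (\<lambda>u. 1 * (\<Sum>n\<in>F. c n * f n u) + c x * f x u) H"
    using insert by (simp add: add.commute)
  also have "\<dots> = L2inner (\<lambda>u. \<Sum>n\<in>F. c n * f n u) H + c x * L2inner (f x) H"
    using insert by (subst L2inner_lin) (auto intro: sq_int_sum)
  finally show ?case using insert by (simp add: add.commute)
qed

lemma L2inner_minus_left:
  assumes "F \<in> sq_int" "G \<in> sq_int" "H \<in> sq_int"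
  shows "L2inner (\<lambda>u. F u - G u) H = L2inner F H - L2inner G H"
  using L2inner_lin[OF assms, of 1 "-1"] by simp

lemma L2_CS:
  assumes "F \<in> sq_int" "G \<in> sq_int"
  shows "(L2inner F G)^2 \<le> L2inner F F * L2inner G G"
proof -
  have q: "0 \<le> L2inner F F * t^2 - 2 * t * L2inner F G + L2inner G G" for t
  proof -
    have "0 \<le> L2inner (\<lambda>u. t * F u + (-1) * G u) (\<lambda>u. t * F u + (-1) * G u)"
      by (rule L2inner_nonneg)
    also have "\<dots> = t * L2inner F (\<lambda>u. t * F u + (-1) * G u) + (-1) * L2inner G (\<lambda>u. t * F u + (-1) * G u)"
      using assms by (intro L2inner_lin sq_int_lin)
    also have "L2inner F (\<lambda>u. t * F u + (-1) * G u) = t * L2inner F F + (-1) * L2inner F G"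
      using assms by (intro L2inner_lin2)
    also have "L2inner G (\<lambda>u. t * F u + (-1) * G u) = t * L2inner G F + (-1) * L2inner G G"
      using assms by (intro L2inner_lin2)
    also have "t * (t * L2inner F F + (-1) * L2inner F G) + (-1) * (t * L2inner G F + (-1) * L2inner G G)
       = L2inner F F * t^2 - 2 * t * L2inner F G + L2inner G G"
      by (simp add: L2inner_sym[of G F] algebra_simps power2_eq_square)
    finally show ?thesis .
  qed
  show ?thesis
  proof (cases "L2inner F F = 0")
    case True
    have "L2inner F G = 0"
    proof (rule ccontr)
      assume ne: "L2inner F G \<noteq> 0"
      define t where "t = (L2inner G G + 1) / (2 * L2inner F G)"
      have "0 \<le> L2inner F F * t^2 - 2 * t * L2inner F G + L2inner G G" by (rule q)
      hence "0 \<le> - 2 * t * L2inner F G + L2inner G G" using True by simp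
      moreover have "2 * t * L2inner F G = L2inner G G + 1" using ne unfolding t_def by (simp add: field_simps)
      ultimately show False by linarith
    qed
    then show ?thesis using True by simp
  next
    case False
    then have pos: "L2inner F F > 0" using L2inner_nonneg[of F] by simp
    have "0 \<le> L2inner F F * (L2inner F G / L2inner F F)^2 - 2 * (L2inner F G / L2inner F F) * L2inner F G + L2inner G G"
      by (rule q)
    then have "0 \<le> L2inner G G - (L2inner F G)^2 / L2inner F F"
      using pos by (simp add: power2_eq_square field_simps)
    then show ?thesis using pos by (simp add: field_simps)
  qed
qed



lemma eig_nonneg:
  assumes apos: "\<alpha> > 0" and aL: "\<alpha>L > 0" and aR: "\<alpha>R > 0"
    and ef: "is_eigenfunction \<beta> \<alpha> \<alpha>L \<alpha>R lam \<psi>" and sq: "\<psi> \<in> sq_int" and nm: "L2inner \<psi> \<psi> = 1"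
  shows "lam \<ge> 0"
proof -
  obtain \<psi>' \<psi>'' where
    d1: "\<And>u. u \<in> {0..1} \<Longrightarrow> (\<psi> has_real_derivative \<psi>' u) (at u within {0..1})" and
    d2: "\<And>u. u \<in> {0..1} \<Longrightarrow> (\<psi>' has_real_derivative \<psi>'' u) (at u within {0..1})" and
    eq: "\<And>u. u \<in> {0..1} \<Longrightarrow> - \<alpha> * \<psi>'' u = lam * \<psi> u" and
    bc: "(if \<beta> < 1 then \<psi> 0 = 0 \<and> \<psi> 1 = 0
         else if \<beta> = 1 then \<alpha> * \<psi>' 0 = \<alpha>L * \<psi> 0 \<and> - \<alpha> * \<psi>' 1 = \<alpha>R * \<psi> 1
         else \<psi>' 0 = 0 \<and> \<psi>' 1 = 0)"
    using ef unfolding is_eigenfunction_def by blast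
  have c1: "continuous_on {0..1} \<psi>'"
    unfolding continuous_on_eq_continuous_within
  proof
    fix u assume "u \<in> {0..1::real}"
    from DERIV_continuous[OF d2[OF this]] show "continuous (at u within {0..1}) \<psi>'" .
  qed
  define p where "p u = \<psi>' u * \<psi> u" for u
  have dp: "(p has_vector_derivative (\<psi>' u * \<psi>' u + \<psi>'' u * \<psi> u)) (at u within {0..1})" if "u \<in> {0..1}" for u
    unfolding p_def has_real_derivative_iff_has_vector_derivative[symmetric]
    by (rule DERIV_mult'[OF d2[OF that] d1[OF that]])
  have ftc: "((\<lambda>u. \<psi>' u * \<psi>' u + \<psi>'' u * \<psi> u) has_integral (p 1 - p 0)) {0..1}"
    by (rule fundamental_theorem_of_calculus) (auto intro: dp)
  have i2: "((\<lambda>u. \<psi>' u * \<psi>' u) has_integral integral {0..1} (\<lambda>u. \<psi>' u * \<psi>' u)) {0..1}"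
    by (intro integrable_integral integrable_continuous_interval continuous_on_mult c1)
  have i2pos: "integral {0..1} (\<lambda>u. \<psi>' u * \<psi>' u) \<ge> 0"
    by (intro integral_nonneg integrable_continuous_interval continuous_on_mult c1) auto
  have si: "set_integrable lborel {0..1} (\<lambda>u. \<psi> u * \<psi> u)"
    using sq by (simp add: sq_int_def power2_eq_square)
  have i1: "((\<lambda>u. \<psi> u * \<psi> u) has_integral 1) {0..1}"
  proof -
    have "(\<lambda>u. \<psi> u * \<psi> u) integrable_on {0..1}" by (rule set_borel_integral_eq_integral(1)[OF si])
    moreover have "integral {0..1} (\<lambda>u. \<psi> u * \<psi> u) = 1"
      using set_borel_integral_eq_integral(2)[OF si] nm by (simp add: L2inner_def)
    ultimately show ?thesis using integrable_integral by fastforce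
  qed
  have "((\<lambda>u. \<psi>' u * \<psi>' u + (- lam / \<alpha>) * (\<psi> u * \<psi> u)) has_integral
      (integral {0..1} (\<lambda>u. \<psi>' u * \<psi>' u) + (- lam / \<alpha>) * 1)) {0..1}"
    by (intro has_integral_add i2 has_integral_mult_right i1)
  moreover have "\<psi>' u * \<psi>' u + (- lam / \<alpha>) * (\<psi> u * \<psi> u) = \<psi>' u * \<psi>' u + \<psi>'' u * \<psi> u" if "u \<in> {0..1}" for u
  proof -
    have "\<psi>'' u = - lam / \<alpha> * \<psi> u" using eq[OF that] apos by (simp add: field_simps)
    then show ?thesis by simp
  qed
  ultimately have "((\<lambda>u. \<psi>' u * \<psi>' u + \<psi>'' u * \<psi> u) has_integral
      (integral {0..1} (\<lambda>u. \<psi>' u * \<psi>' u) + (- lam / \<alpha>) * 1)) {0..1}"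
    by (rule has_integral_eq[rotated])
  from has_integral_unique[OF ftc this] have key: "p 1 - p 0 = integral {0..1} (\<lambda>u. \<psi>' u * \<psi>' u) - lam / \<alpha>"
    by simp
  have bnd: "p 1 - p 0 \<le> 0"
  proof (cases "\<beta> < 1")
    case True then show ?thesis using bc by (simp add: p_def)
  next
    case False
    show ?thesis
    proof (cases "\<beta> = 1")
      case True
      then have b0: "\<psi>' 0 = \<alpha>L / \<alpha> * \<psi> 0" and b1: "\<psi>' 1 = - (\<alpha>R / \<alpha> * \<psi> 1)"
        using bc False apos by (auto simp: field_simps)
      have "p 1 = - (\<alpha>R / \<alpha>) * (\<psi> 1 * \<psi> 1)" by (simp add: p_def b1)
      moreover have "p 0 = (\<alpha>L / \<alpha>) * (\<psi> 0 * \<psi> 0)" by (simp add: p_def b0)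
      moreover have "0 \<le> (\<alpha>R / \<alpha>) * (\<psi> 1 * \<psi> 1)" using aR apos by simp
      moreover have "0 \<le> (\<alpha>L / \<alpha>) * (\<psi> 0 * \<psi> 0)" using aL apos by simp
      ultimately show ?thesis by linarith
    next
      case False2: False
      then show ?thesis using bc False by (simp add: p_def)
    qed
  qed
  have "lam / \<alpha> \<ge> 0" using key bnd i2pos by linarith
  then show ?thesis using apos by (simp add: zero_le_divide_iff)
qed



locale eb =
  fixes \<beta> \<alpha> \<alpha>L \<alpha>R :: real and \<psi> :: "nat \<Rightarrow> real \<Rightarrow> real" and lam :: "nat \<Rightarrow> real"
  assumes apos: "\<alpha> > 0" and aLpos: "\<alpha>L > 0" and aRpos: "\<alpha>R > 0"
    and basis: "is_eigenbasis \<beta> \<alpha> \<alpha>L \<alpha>R \<psi> lam"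
begin

lemma psi_sq: "\<psi> n \<in> sq_int" using basis by (simp add: is_eigenbasis_def)
lemma orth: "L2inner (\<psi> n) (\<psi> m) = (if n = m then 1 else 0)" using basis by (simp add: is_eigenbasis_def)
lemma compl: "F \<in> sq_int \<Longrightarrow> (\<And>n. L2inner F (\<psi> n) = 0) \<Longrightarrow> AE u in lborel. u \<in> {0..1} \<longrightarrow> F u = 0"
  using basis by (simp add: is_eigenbasis_def)
lemma eigf: "is_eigenfunction \<beta> \<alpha> \<alpha>L \<alpha>R (lam n) (\<psi> n)" using basis by (simp add: is_eigenbasis_def)

lemma lam_nonneg: "lam n \<ge> 0"
  by (rule eig_nonneg[OF apos aLpos aRpos eigf psi_sq]) (simp add: orth)

definition w :: "int \<Rightarrow> nat \<Rightarrow> real" where "w k n = (1 + lam n) powi k"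

lemma w_pos: "w k n > 0" using lam_nonneg[of n] by (simp add: w_def)
lemma w_nonneg: "w k n \<ge> 0" using w_pos[of k n] by simp
lemma w_mono: "k \<le> k' \<Longrightarrow> w k n \<le> w k' n"
  unfolding w_def using lam_nonneg[of n] by (intro power_int_increasing) auto
lemma w_add: "w (k + j) n = w k n * w j n"
  unfolding w_def using lam_nonneg[of n] by (intro power_int_add) auto
lemma w_0[simp]: "w 0 n = 1" by (simp add: w_def)
lemma lam_sq_le: "(lam n)^2 \<le> w 2 n"
proof -
  have "w 2 n = (1 + lam n)^2" by (simp add: w_def power_int_def)
  then show ?thesis using lam_nonneg[of n] by (simp add: power2_eq_square algebra_simps)
qed

definition coef :: "(real \<Rightarrow> real) \<Rightarrow> nat \<Rightarrow> real" where "coef F n = L2inner F (\<psi> n)"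
definition Sseq :: "(nat \<Rightarrow> real) set" where "Sseq = {x. \<forall>k. summable (\<lambda>n. w k n * (x n)^2)}"
definition nrm :: "int \<Rightarrow> (nat \<Rightarrow> real) \<Rightarrow> real" where "nrm k x = (\<Sum>n. w k n * (x n)^2)"

lemma Snorm_eq: "Snorm_sq \<psi> lam k F = nrm k (coef F)"
  by (simp add: Snorm_sq_def nrm_def w_def coef_def)

lemma Sspace_iff: "F \<in> Sspace \<psi> lam \<longleftrightarrow> F \<in> sq_int \<and> coef F \<in> Sseq"
  by (simp add: Sspace_def Sseq_def w_def coef_def)

lemma Sseq_summ: "x \<in> Sseq \<Longrightarrow> summable (\<lambda>n. w k n * (x n)^2)"
  by (simp add: Sseq_def)

lemma nrm_nonneg: "x \<in> Sseq \<Longrightarrow> nrm k x \<ge> 0"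
  unfolding nrm_def by (intro suminf_nonneg Sseq_summ) (auto intro: mult_nonneg_nonneg w_nonneg)

lemma Sseq_lin:
  assumes "x \<in> Sseq" "y \<in> Sseq"
  shows "(\<lambda>n. a * x n + b * y n) \<in> Sseq"
  unfolding Sseq_def mem_Collect_eq
proof (intro allI)
  fix k
  have s: "summable (\<lambda>n. 2 * a^2 * (w k n * (x n)^2) + 2 * b^2 * (w k n * (y n)^2))"
    using assms by (intro summable_add summable_mult Sseq_summ)
  show "summable (\<lambda>n. w k n * (a * x n + b * y n)^2)"
  proof (rule summable_comparison_test'[OF s])
    fix n
    have "(a * x n + b * y n)^2 \<le> 2 * a^2 * (x n)^2 + 2 * b^2 * (y n)^2"
      using sum_squares_bound[of "a * x n" "b * y n"]
      by (simp add: power2_eq_square algebra_simps)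
    then have "w k n * (a * x n + b * y n)^2 \<le> w k n * (2 * a^2 * (x n)^2 + 2 * b^2 * (y n)^2)"
      by (intro mult_left_mono w_nonneg)
    then show "norm (w k n * (a * x n + b * y n)^2) \<le> 2 * a^2 * (w k n * (x n)^2) + 2 * b^2 * (w k n * (y n)^2)"
      using w_nonneg[of k n] by (simp add: algebra_simps)
  qed
qed

lemma Sseq_fin: "finite A \<Longrightarrow> (\<And>n. n \<notin> A \<Longrightarrow> x n = 0) \<Longrightarrow> x \<in> Sseq"
  unfolding Sseq_def by (auto intro!: summable_finite[of A])

lemma Sseq_mult_bounded:
  assumes "x \<in> Sseq" "\<And>n. \<bar>m n\<bar> \<le> B"
  shows "(\<lambda>n. m n * x n) \<in> Sseq"
  unfolding Sseq_def mem_Collect_eq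
proof (intro allI)
  fix k
  show "summable (\<lambda>n. w k n * (m n * x n)^2)"
  proof (rule summable_comparison_test'[OF summable_mult[OF Sseq_summ[OF assms(1)], of "B^2" k]])
    fix n
    have "(m n)^2 \<le> B^2" using assms(2)[of n]
      using power_mono[OF assms(2)[of n] abs_ge_zero, of 2] by simp
    then have "w k n * (m n * x n)^2 \<le> B^2 * (w k n * (x n)^2)"
      using w_nonneg[of k n] zero_le_power2[of "x n"]
      by (simp add: power_mult_distrib algebra_simps mult_left_mono mult_right_mono)
    then show "norm (w k n * (m n * x n)^2) \<le> B^2 * (w k n * (x n)^2)"
      using w_nonneg[of k n] by simp
  qed
qed

lemma Sseq_lam_mult:
  assumes "x \<in> Sseq"
  shows "(\<lambda>n. lam n * x n) \<in> Sseq"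
  unfolding Sseq_def mem_Collect_eq
proof (intro allI)
  fix k
  show "summable (\<lambda>n. w k n * (lam n * x n)^2)"
  proof (rule summable_comparison_test'[OF Sseq_summ[OF assms(1), of "k+2"]])
    fix n
    have "w k n * (lam n)^2 \<le> w k n * w 2 n" by (intro mult_left_mono lam_sq_le w_nonneg)
    then have "w k n * (lam n)^2 * (x n)^2 \<le> w k n * w 2 n * (x n)^2" by (intro mult_right_mono) auto
    then show "norm (w k n * (lam n * x n)^2) \<le> w (k+2) n * (x n)^2"
      using w_nonneg[of k n] by (simp add: w_add power_mult_distrib algebra_simps)
  qed
qed

lemma nrm_mono_mult:
  assumes "x \<in> Sseq" "\<And>n. \<bar>m n\<bar> \<le> 1"
  shows "nrm k (\<lambda>n. m n * x n) \<le> nrm k x"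
  unfolding nrm_def
proof (rule suminf_le)
  fix n
  have "(m n)^2 \<le> 1" using power_mono[OF assms(2)[of n] abs_ge_zero, of 2] by simp
  then have "(m n)^2 * (x n)^2 \<le> 1 * (x n)^2" by (intro mult_right_mono) auto
  then have "(m n * x n)^2 \<le> (x n)^2" by (simp add: power_mult_distrib)
  then show "w k n * (m n * x n)^2 \<le> w k n * (x n)^2" by (intro mult_left_mono w_nonneg)
  show "summable (\<lambda>n. w k n * (m n * x n)^2)" by (rule Sseq_summ[OF Sseq_mult_bounded[OF assms]])
  show "summable (\<lambda>n. w k n * (x n)^2)" by (rule Sseq_summ[OF assms(1)])
qed

definition Pn :: "(nat \<Rightarrow> real) \<Rightarrow> nat set \<Rightarrow> real \<Rightarrow> real" where
  "Pn x A = (\<lambda>u. \<Sum>n\<in>A. x n * \<psi> n u)"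

lemma Pn_sq: "Pn x A \<in> sq_int"
  unfolding Pn_def by (intro sq_int_sum psi_sq)

lemma coef_Pn: "finite A \<Longrightarrow> coef (Pn x A) m = (if m \<in> A then x m else 0)"
proof -
  assume A: "finite A"
  have "coef (Pn x A) m = (\<Sum>n\<in>A. x n * L2inner (\<psi> n) (\<psi> m))"
    unfolding coef_def Pn_def by (intro L2inner_sum psi_sq)
  also have "\<dots> = (\<Sum>n\<in>A. if n = m then x m else 0)"
    by (intro sum.cong) (auto simp: orth)
  also have "\<dots> = (if m \<in> A then x m else 0)" using A by (simp add: sum.delta')
  finally show ?thesis .
qed

lemma Pn_Sspace: "finite A \<Longrightarrow> Pn x A \<in> Sspace \<psi> lam"
  unfolding Sspace_iff using Pn_sq by (auto intro!: Sseq_fin[of A] simp: coef_Pn)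

lemma coef_psi: "coef (\<psi> n) = (\<lambda>m. if m = n then 1 else 0)"
  by (auto simp: coef_def orth)

lemma psi_Sspace: "\<psi> n \<in> Sspace \<psi> lam"
  unfolding Sspace_iff using psi_sq by (auto intro!: Sseq_fin[of "{n}"] simp: coef_psi split: if_splits)

lemma coef_lin: "F \<in> sq_int \<Longrightarrow> G \<in> sq_int \<Longrightarrow> coef (\<lambda>u. a * F u + b * G u) = (\<lambda>n. a * coef F n + b * coef G n)"
  unfolding coef_def by (auto intro!: L2inner_lin psi_sq)

lemma Sspace_lin: "F \<in> Sspace \<psi> lam \<Longrightarrow> G \<in> Sspace \<psi> lam \<Longrightarrow> (\<lambda>u. a * F u + b * G u) \<in> Sspace \<psi> lam"
  unfolding Sspace_iff by (simp add: coef_lin sq_int_lin Sseq_lin)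

lemma nrm_fin: "finite A \<Longrightarrow> (\<And>n. n \<notin> A \<Longrightarrow> x n = 0) \<Longrightarrow> nrm k x = (\<Sum>n\<in>A. w k n * (x n)^2)"
  unfolding nrm_def by (rule suminf_finite) auto

lemma nrm_Pn: "finite A \<Longrightarrow> nrm k (coef (Pn x A)) = (\<Sum>n\<in>A. w k n * (x n)^2)"
  by (subst nrm_fin[of A]) (auto simp: coef_Pn intro!: sum.cong)

lemma Sdual_lin: "d \<in> Sdual \<psi> lam \<Longrightarrow> F \<in> Sspace \<psi> lam \<Longrightarrow> G \<in> Sspace \<psi> lam \<Longrightarrow>
   d (\<lambda>u. a * F u + b * G u) = a * d F + b * d G"
  by (simp add: Sdual_def)

lemma Sdual_out: "d \<in> Sdual \<psi> lam \<Longrightarrow> F \<notin> Sspace \<psi> lam \<Longrightarrow> d F = 0"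
  by (simp add: Sdual_def)

lemma Sdual_bound:
  assumes "d \<in> Sdual \<psi> lam"
  obtains k C where "C \<ge> 0" "\<And>F. F \<in> Sspace \<psi> lam \<Longrightarrow> \<bar>d F\<bar> \<le> C * sqrt (nrm k (coef F))"
proof -
  obtain k C where kC: "\<forall>F\<in>Sspace \<psi> lam. \<bar>d F\<bar> \<le> C * sqrt (Snorm_sq \<psi> lam k F)"
    using assms by (auto simp: Sdual_def)
  have "\<bar>d F\<bar> \<le> max C 0 * sqrt (nrm k (coef F))" if "F \<in> Sspace \<psi> lam" for F
  proof -
    have "\<bar>d F\<bar> \<le> C * sqrt (nrm k (coef F))" using kC that by (simp add: Snorm_eq)
    also have "\<dots> \<le> max C 0 * sqrt (nrm k (coef F))"
      using that by (intro mult_right_mono) (auto simp: Sspace_iff nrm_nonneg)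
    finally show ?thesis .
  qed
  then show ?thesis using that[of "max C 0" k] by auto
qed

lemma Sdual_zero_fun: "d \<in> Sdual \<psi> lam \<Longrightarrow> d (\<lambda>u. 0) = 0"
  using Sdual_lin[of d "\<psi> 0" "\<psi> 0" 0 0] psi_Sspace by simp

lemma Sdual_Pn: 
  assumes "d \<in> Sdual \<psi> lam" "finite A"
  shows "d (Pn x A) = (\<Sum>n\<in>A. x n * d (\<psi> n))"
  using assms(2)
proof (induction A rule: finite_induct)
  case empty then show ?case using Sdual_zero_fun[OF assms(1)] by (simp add: Pn_def)
next
  case (insert a A)
  have "Pn x (insert a A) = (\<lambda>u. 1 * Pn x A u + x a * \<psi> a u)"
    using insert by (auto simp: Pn_def add.commute)
  moreover have "d (\<lambda>u. 1 * Pn x A u + x a * \<psi> a u) = 1 * d (Pn x A) + x a * d (\<psi> a)"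
    by (rule Sdual_lin[OF assms(1)]) (auto intro: Pn_Sspace psi_Sspace insert)
  ultimately have "d (Pn x (insert a A)) = 1 * d (Pn x A) + x a * d (\<psi> a)" by simp
  then show ?case using insert by (simp add: add.commute)
qed

definition Lam :: "((real \<Rightarrow> real) \<Rightarrow> real) \<Rightarrow> (nat \<Rightarrow> real) \<Rightarrow> real" where
  "Lam d x = lim (\<lambda>N. \<Sum>n<N. x n * d (\<psi> n))"

lemma Lam_Cauchy:
  assumes d: "d \<in> Sdual \<psi> lam" and x: "x \<in> Sseq"
  shows "convergent (\<lambda>N. \<Sum>n<N. x n * d (\<psi> n))"
proof -
  obtain k C where C: "C \<ge> 0" and b: "\<And>F. F \<in> Sspace \<psi> lam \<Longrightarrow> \<bar>d F\<bar> \<le> C * sqrt (nrm k (coef F))"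
    using Sdual_bound[OF d] by blast
  define s where "s N = (\<Sum>n<N. w k n * (x n)^2)" for N
  have "convergent s" unfolding s_def
    using Sseq_summ[OF x] summable_iff_convergent by auto
  then have sC: "Cauchy s" by (rule convergent_Cauchy)
  have key: "\<bar>(\<Sum>n<N. x n * d (\<psi> n)) - (\<Sum>n<M. x n * d (\<psi> n))\<bar> \<le> C * sqrt (\<bar>s N - s M\<bar>)"
    if "M \<le> N" for M N
  proof -
    have "(\<Sum>n<N. x n * d (\<psi> n)) - (\<Sum>n<M. x n * d (\<psi> n)) = (\<Sum>n\<in>{M..<N}. x n * d (\<psi> n))"
      using that by (simp add: lessThan_atLeast0 sum_diff_nat_ivl)
    also have "\<dots> = d (Pn x {M..<N})" by (simp add: Sdual_Pn[OF d])
    finally have e1: "(\<Sum>n<N. x n * d (\<psi> n)) - (\<Sum>n<M. x n * d (\<psi> n)) = d (Pn x {M..<N})" .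
    have "s N - s M = (\<Sum>n\<in>{M..<N}. w k n * (x n)^2)"
      using that by (simp add: s_def lessThan_atLeast0 sum_diff_nat_ivl)
    also have "\<dots> = nrm k (coef (Pn x {M..<N}))" by (simp add: nrm_Pn)
    finally have e2': "s N - s M = nrm k (coef (Pn x {M..<N}))" .
    have "nrm k (coef (Pn x {M..<N})) \<ge> 0"
      using Pn_Sspace[of "{M..<N}" x] by (intro nrm_nonneg) (simp add: Sspace_iff)
    then have e2: "\<bar>s N - s M\<bar> = nrm k (coef (Pn x {M..<N}))" using e2' by simp
    show ?thesis unfolding e1 e2 by (intro b Pn_Sspace) simp
  qed
  have "Cauchy (\<lambda>N. \<Sum>n<N. x n * d (\<psi> n))"
  proof (rule metric_CauchyI)
    fix e :: real assume e: "e > 0"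
    define e' where "e' = (e / (C + 1))^2"
    have e': "e' > 0" using e C by (simp add: e'_def)
    obtain M where M: "\<And>m n. m \<ge> M \<Longrightarrow> n \<ge> M \<Longrightarrow> dist (s m) (s n) < e'"
      using metric_CauchyD[OF sC e'] by blast
    have "dist (\<Sum>n<m. x n * d (\<psi> n)) (\<Sum>n<n. x n * d (\<psi> n)) < e" if "m \<ge> M" "n \<ge> M" for m n
    proof -
      have gen: "\<bar>(\<Sum>n<b. x n * d (\<psi> n)) - (\<Sum>n<a. x n * d (\<psi> n))\<bar> < e" if "a \<ge> M" "b \<ge> M" "a \<le> b" for a b
      proof -
        have "\<bar>s b - s a\<bar> < e'" using M[OF that(2,1)] by (simp add: dist_real_def)
        then have "sqrt \<bar>s b - s a\<bar> < sqrt ((e / (C + 1))^2)"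
          unfolding e'_def by (rule real_sqrt_less_mono)
        also have "sqrt ((e / (C + 1))^2) = e / (C + 1)" using e C by simp
        finally have "sqrt \<bar>s b - s a\<bar> < e / (C + 1)" .
        then have "C * sqrt \<bar>s b - s a\<bar> \<le> C * (e / (C + 1))" using C by (intro mult_left_mono) auto
        also have "\<dots> < e" using e C by (simp add: field_simps)
        finally show ?thesis using key[OF that(3)] by linarith
      qed
      show ?thesis
      proof (cases "m \<le> n")
        case True then show ?thesis using gen[of m n] that by (simp add: dist_real_def abs_minus_commute)
      next
        case False then show ?thesis using gen[of n m] that by (simp add: dist_real_def)
      qed
    qed
    then show "\<exists>M. \<forall>m\<ge>M. \<forall>n\<ge>M. dist (\<Sum>n<m. x n * d (\<psi> n)) (\<Sum>n<n. x n * d (\<psi> n)) < e" by blast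
  qed
  then show ?thesis by (simp add: Cauchy_convergent_iff)
qed

lemma Lam_conv: "d \<in> Sdual \<psi> lam \<Longrightarrow> x \<in> Sseq \<Longrightarrow> (\<lambda>N. \<Sum>n<N. x n * d (\<psi> n)) \<longlonglongrightarrow> Lam d x"
  unfolding Lam_def using Lam_Cauchy convergent_LIMSEQ_iff by auto

lemma Lam_bound:
  assumes d: "d \<in> Sdual \<psi> lam" and x: "x \<in> Sseq" and C: "C \<ge> 0"
    and b: "\<And>F. F \<in> Sspace \<psi> lam \<Longrightarrow> \<bar>d F\<bar> \<le> C * sqrt (nrm k (coef F))"
  shows "\<bar>Lam d x\<bar> \<le> C * sqrt (nrm k x)"
proof -
  have "(\<lambda>N. \<bar>\<Sum>n<N. x n * d (\<psi> n)\<bar>) \<longlonglongrightarrow> \<bar>Lam d x\<bar>"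
    by (intro tendsto_rabs Lam_conv d x)
  moreover have "\<bar>\<Sum>n<N. x n * d (\<psi> n)\<bar> \<le> C * sqrt (nrm k x)" for N
  proof -
    have "\<bar>\<Sum>n<N. x n * d (\<psi> n)\<bar> = \<bar>d (Pn x {..<N})\<bar>" by (simp add: Sdual_Pn[OF d])
    also have "\<dots> \<le> C * sqrt (nrm k (coef (Pn x {..<N})))" by (intro b Pn_Sspace) simp
    finally have 1: "\<bar>\<Sum>n<N. x n * d (\<psi> n)\<bar> \<le> C * sqrt (nrm k (coef (Pn x {..<N})))" .
    have "nrm k (coef (Pn x {..<N})) = (\<Sum>n<N. w k n * (x n)^2)" by (simp add: nrm_Pn)
    also have "\<dots> \<le> nrm k x" unfolding nrm_def
      by (intro sum_le_suminf Sseq_summ x) (auto intro: mult_nonneg_nonneg w_nonneg)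
    finally have "sqrt (nrm k (coef (Pn x {..<N}))) \<le> sqrt (nrm k x)" by simp
    then have "C * sqrt (nrm k (coef (Pn x {..<N}))) \<le> C * sqrt (nrm k x)" using C by (rule mult_left_mono)
    then show ?thesis using 1 by linarith
  qed
  ultimately show ?thesis by (intro LIMSEQ_le_const2[of "\<lambda>N. \<bar>\<Sum>n<N. x n * d (\<psi> n)\<bar>"]) auto
qed

lemma Lam_K:
  assumes d: "d \<in> Sdual \<psi> lam" and F: "F \<in> Sspace \<psi> lam"
  shows "d F = Lam d (coef F)"
proof -
  obtain k C where C: "C \<ge> 0" and b: "\<And>F. F \<in> Sspace \<psi> lam \<Longrightarrow> \<bar>d F\<bar> \<le> C * sqrt (nrm k (coef F))"
    using Sdual_bound[OF d] by blast
  have Fs: "F \<in> sq_int" "coef F \<in> Sseq" using F by (auto simp: Sspace_iff)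
  let ?x = "coef F"
  have diff: "d F - (\<Sum>n<N. ?x n * d (\<psi> n)) = d (\<lambda>u. 1 * F u + (-1) * Pn ?x {..<N} u)" for N
    using Sdual_lin[OF d F Pn_Sspace[of "{..<N}" ?x], of 1 "-1"] Sdual_Pn[OF d, of "{..<N}" ?x] by simp
  have cf: "coef (\<lambda>u. 1 * F u + (-1) * Pn ?x {..<N} u) = (\<lambda>n. if n < N then 0 else ?x n)" for N
    using coef_lin[OF Fs(1) Pn_sq[of ?x "{..<N}"], of 1 "-1"] by (auto simp: coef_Pn)
  have nr: "nrm k (coef (\<lambda>u. 1 * F u + (-1) * Pn ?x {..<N} u)) = nrm k ?x - (\<Sum>n<N. w k n * (?x n)^2)" for N
  proof -
    have sm: "summable (\<lambda>n. w k n * (?x n)^2)" by (rule Sseq_summ[OF Fs(2)])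
    have "(\<lambda>n. w k n * (if n < N then 0 else ?x n)^2) = (\<lambda>n. w k n * (?x n)^2 - (if n < N then w k n * (?x n)^2 else 0))"
      by auto
    then have "nrm k (coef (\<lambda>u. 1 * F u + (-1) * Pn ?x {..<N} u)) = (\<Sum>n. w k n * (?x n)^2 - (if n < N then w k n * (?x n)^2 else 0))"
      unfolding cf nrm_def by simp
    also have "\<dots> = nrm k ?x - (\<Sum>n. (if n < N then w k n * (?x n)^2 else 0))"
      unfolding nrm_def by (rule suminf_diff[symmetric, OF sm summable_finite[of "{..<N}"]]) auto
    also have "(\<Sum>n. (if n < N then w k n * (?x n)^2 else 0)) = (\<Sum>n<N. w k n * (?x n)^2)"
      by (subst suminf_finite[of "{..<N}"]) auto
    finally show ?thesis .
  qed
  have t0: "(\<lambda>N. nrm k ?x - (\<Sum>n<N. w k n * (?x n)^2)) \<longlonglongrightarrow> 0"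
  proof -
    have "(\<lambda>N. \<Sum>n<N. w k n * (?x n)^2) \<longlonglongrightarrow> nrm k ?x"
      unfolding nrm_def by (rule summable_LIMSEQ[OF Sseq_summ[OF Fs(2)]])
    then have "(\<lambda>N. nrm k ?x - (\<Sum>n<N. w k n * (?x n)^2)) \<longlonglongrightarrow> nrm k ?x - nrm k ?x"
      by (intro tendsto_diff tendsto_const)
    then show ?thesis by simp
  qed
  have "(\<lambda>N. C * sqrt (nrm k ?x - (\<Sum>n<N. w k n * (?x n)^2))) \<longlonglongrightarrow> C * sqrt 0"
    by (intro tendsto_mult tendsto_const tendsto_real_sqrt t0)
  then have t1: "(\<lambda>N. C * sqrt (nrm k ?x - (\<Sum>n<N. w k n * (?x n)^2))) \<longlonglongrightarrow> 0" by simp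
  have "(\<lambda>N. d F - (\<Sum>n<N. ?x n * d (\<psi> n))) \<longlonglongrightarrow> 0"
  proof (rule Lim_null_comparison[OF _ t1])
    show "\<forall>\<^sub>F N in sequentially. norm (d F - (\<Sum>n<N. ?x n * d (\<psi> n))) \<le> C * sqrt (nrm k ?x - (\<Sum>n<N. w k n * (?x n)^2))"
    proof (intro always_eventually allI)
      fix N
      have "\<bar>d F - (\<Sum>n<N. ?x n * d (\<psi> n))\<bar> \<le> C * sqrt (nrm k (coef (\<lambda>u. 1 * F u + (-1) * Pn ?x {..<N} u)))"
        unfolding diff using F by (intro b Sspace_lin Pn_Sspace) auto
      then show "norm (d F - (\<Sum>n<N. ?x n * d (\<psi> n))) \<le> C * sqrt (nrm k ?x - (\<Sum>n<N. w k n * (?x n)^2))"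
        using nr[of N] by simp
    qed
  qed
  then have "(\<lambda>N. d F - (d F - (\<Sum>n<N. ?x n * d (\<psi> n)))) \<longlonglongrightarrow> d F - 0"
    by (intro tendsto_diff tendsto_const)
  then have "(\<lambda>N. \<Sum>n<N. ?x n * d (\<psi> n)) \<longlonglongrightarrow> d F" by simp
  moreover have "(\<lambda>N. \<Sum>n<N. ?x n * d (\<psi> n)) \<longlonglongrightarrow> Lam d ?x" by (intro Lam_conv d Fs)
  ultimately show ?thesis using LIMSEQ_unique by blast
qed

lemma Lam_lin:
  assumes d: "d \<in> Sdual \<psi> lam" and x: "x \<in> Sseq" and y: "y \<in> Sseq"
  shows "Lam d (\<lambda>n. a * x n + b * y n) = a * Lam d x + b * Lam d y"
proof -
  have "(\<lambda>N. a * (\<Sum>n<N. x n * d (\<psi> n)) + b * (\<Sum>n<N. y n * d (\<psi> n))) \<longlonglongrightarrow> a * Lam d x + b * Lam d y"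
    by (intro tendsto_add tendsto_mult tendsto_const Lam_conv d x y)
  moreover have "(\<lambda>N. a * (\<Sum>n<N. x n * d (\<psi> n)) + b * (\<Sum>n<N. y n * d (\<psi> n))) = (\<lambda>N. \<Sum>n<N. (a * x n + b * y n) * d (\<psi> n))"
    by (auto simp: sum_distrib_left sum.distrib algebra_simps)
  moreover have "(\<lambda>N. \<Sum>n<N. (a * x n + b * y n) * d (\<psi> n)) \<longlonglongrightarrow> Lam d (\<lambda>n. a * x n + b * y n)"
    by (intro Lam_conv d Sseq_lin x y)
  ultimately have "(\<lambda>N. \<Sum>n<N. (a * x n + b * y n) * d (\<psi> n)) \<longlonglongrightarrow> a * Lam d x + b * Lam d y" by simp
  then show ?thesis using \<open>(\<lambda>N. \<Sum>n<N. (a * x n + b * y n) * d (\<psi> n)) \<longlonglongrightarrow> Lam d (\<lambda>n. a * x n + b * y n)\<close>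
    by (intro LIMSEQ_unique)
qed

lemma Lam_single:
  assumes d: "d \<in> Sdual \<psi> lam" and x: "\<And>n. n \<noteq> m \<Longrightarrow> x n = 0"
  shows "Lam d x = x m * d (\<psi> m)"
proof -
  have xs: "x \<in> Sseq" using x by (intro Sseq_fin[of "{m}"]) auto
  have "(\<lambda>N. \<Sum>n<N. x n * d (\<psi> n)) \<longlonglongrightarrow> x m * d (\<psi> m)"
  proof (rule LIMSEQ_offset[where k="Suc m"])
    have "(\<Sum>n<N + Suc m. x n * d (\<psi> n)) = x m * d (\<psi> m)" for N
      using x by (subst sum.mono_neutral_right[of "{..<N + Suc m}" "{m}"]) auto
    then show "(\<lambda>N. \<Sum>n<N + Suc m. x n * d (\<psi> n)) \<longlonglongrightarrow> x m * d (\<psi> m)" by simp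
  qed
  then show ?thesis using Lam_conv[OF d xs] LIMSEQ_unique by blast
qed

end


lemma sq_int_integrable: "F \<in> sq_int \<Longrightarrow> integrable Mi F"
  by (rule Mi.square_integrable_imp_integrable) (simp_all add: sq_int_iff)

lemma sq_int_const: "(\<lambda>u. c) \<in> sq_int"
  by (simp add: sq_int_iff)

lemma sq_int_abs: "F \<in> sq_int \<Longrightarrow> (\<lambda>u. \<bar>F u\<bar>) \<in> sq_int"
  by (simp add: sq_int_iff borel_measurable_abs)

lemma Mi_one: "L2inner (\<lambda>u. 1) (\<lambda>u. 1) = 1"
proof -
  have "measure Mi (space Mi) = 1"
    by (simp add: space_restrict_space measure_restrict_space)
  then show ?thesis unfolding L2inner_Mi by simp
qed

lemma L1_le_L2: "F \<in> sq_int \<Longrightarrow> (LINT u|Mi. \<bar>F u\<bar>)^2 \<le> L2inner F F"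
proof -
  assume F: "F \<in> sq_int"
  have "(L2inner (\<lambda>u. \<bar>F u\<bar>) (\<lambda>u. 1))^2 \<le> L2inner (\<lambda>u. \<bar>F u\<bar>) (\<lambda>u. \<bar>F u\<bar>) * L2inner (\<lambda>u. 1) (\<lambda>u. 1)"
    by (intro L2_CS sq_int_abs F sq_int_const)
  moreover have "L2inner (\<lambda>u. \<bar>F u\<bar>) (\<lambda>u. \<bar>F u\<bar>) = L2inner F F"
    unfolding L2inner_Mi by (simp add: abs_mult[symmetric])
  moreover have "L2inner (\<lambda>u. \<bar>F u\<bar>) (\<lambda>u. 1) = (LINT u|Mi. \<bar>F u\<bar>)"
    unfolding L2inner_Mi by simp
  ultimately show ?thesis by (simp add: Mi_one)
qed

lemma L2inner_abs_le: "F \<in> sq_int \<Longrightarrow> G \<in> sq_int \<Longrightarrow> \<bar>L2inner F G\<bar> \<le> sqrt (L2inner F F) * sqrt (L2inner G G)"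
proof -
  assume "F \<in> sq_int" "G \<in> sq_int"
  then have "(L2inner F G)^2 \<le> L2inner F F * L2inner G G" by (rule L2_CS)
  then have "sqrt ((L2inner F G)^2) \<le> sqrt (L2inner F F * L2inner G G)" by (rule real_sqrt_le_mono)
  then show ?thesis by (simp add: real_sqrt_mult)
qed

context eb begin

lemma Pn_diff: "M \<le> N \<Longrightarrow> (\<lambda>u. Pn x {..<N} u - Pn x {..<M} u) = Pn x {M..<N}"
  unfolding Pn_def by (auto simp: lessThan_atLeast0 sum_diff_nat_ivl)

lemma Pn_norm: "finite A \<Longrightarrow> L2inner (Pn x A) (Pn x A) = (\<Sum>n\<in>A. (x n)^2)"
proof -
  assume A: "finite A"
  have "L2inner (Pn x A) (Pn x A) = (\<Sum>n\<in>A. x n * L2inner (\<psi> n) (Pn x A))"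
    unfolding Pn_def[of x A] by (intro L2inner_sum psi_sq) (simp add: Pn_def[symmetric] Pn_sq)
  also have "\<dots> = (\<Sum>n\<in>A. x n * x n)"
    by (intro sum.cong refl) (simp add: L2inner_sym[of "\<psi> _"] coef_def[symmetric] coef_Pn A)
  finally show ?thesis by (simp add: power2_eq_square)
qed

lemma coef_abs_le: "F \<in> sq_int \<Longrightarrow> \<bar>coef F m\<bar> \<le> sqrt (L2inner F F)"
  using L2inner_abs_le[OF _ psi_sq, of F m] by (simp add: coef_def orth)

lemma RF:
  assumes x: "summable (\<lambda>n. (x n)^2)"
  shows "\<exists>H\<in>sq_int. (\<forall>m. coef H m = x m) \<and>
     (\<forall>N. L2inner (\<lambda>u. H u - Pn x {..<N} u) (\<lambda>u. H u - Pn x {..<N} u) \<le> (\<Sum>n. (x n)^2) - (\<Sum>n<N. (x n)^2))"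
proof -
  define T where "T N = (\<Sum>n. (x n)^2) - (\<Sum>n<N. (x n)^2)" for N
  define s where "s N = Pn x {..<N}" for N
  have s_sq: "s N \<in> sq_int" for N unfolding s_def by (rule Pn_sq)
  have s_meas[measurable]: "s N \<in> borel_measurable Mi" for N by (rule sq_int_meas[OF s_sq])
  have s_int: "integrable Mi (s N)" for N by (rule sq_int_integrable[OF s_sq])
  have T_tend: "T \<longlonglongrightarrow> 0"
  proof -
    have "(\<lambda>N. \<Sum>n<N. (x n)^2) \<longlonglongrightarrow> (\<Sum>n. (x n)^2)" by (rule summable_LIMSEQ[OF x])
    then have "(\<lambda>N. (\<Sum>n. (x n)^2) - (\<Sum>n<N. (x n)^2)) \<longlonglongrightarrow> (\<Sum>n. (x n)^2) - (\<Sum>n. (x n)^2)"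
      by (intro tendsto_diff tendsto_const)
    then show ?thesis unfolding T_def by simp
  qed
  have T_nonneg: "T N \<ge> 0" for N
    unfolding T_def using sum_le_suminf[OF x, of "{..<N}"] by simp
  have nd: "L2inner (\<lambda>u. s N u - s M u) (\<lambda>u. s N u - s M u) \<le> T M" if "M \<le> N" for M N
  proof -
    have "L2inner (\<lambda>u. s N u - s M u) (\<lambda>u. s N u - s M u) = (\<Sum>n\<in>{M..<N}. (x n)^2)"
      unfolding s_def Pn_diff[OF that] by (simp add: Pn_norm)
    also have "\<dots> = (\<Sum>n<N. (x n)^2) - (\<Sum>n<M. (x n)^2)"
      using that by (simp add: lessThan_atLeast0 sum_diff_nat_ivl)
    also have "\<dots> \<le> T M" unfolding T_def using sum_le_suminf[OF x, of "{..<N}"] by simp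
    finally show ?thesis .
  qed
  have L1C: "\<exists>N. \<forall>i\<ge>N. \<forall>j\<ge>N. (LINT u|Mi. norm (s i u - s j u)) < e" if e: "e > 0" for e
  proof -
    obtain N where N0: "\<forall>n\<ge>N. norm (T n - 0) < e^2"
      using LIMSEQ_D[OF T_tend, of "e^2"] e by auto
    have N: "T n < e^2" if "n \<ge> N" for n
      using N0 that by auto
    have aux: "(LINT u|Mi. \<bar>s b u - s a u\<bar>) < e" if "a \<ge> N" "a \<le> b" for a b
    proof -
      have "(LINT u|Mi. \<bar>s b u - s a u\<bar>)^2 \<le> L2inner (\<lambda>u. s b u - s a u) (\<lambda>u. s b u - s a u)"
        by (intro L1_le_L2 sq_int_diff s_sq)
      also have "\<dots> \<le> T a" by (rule nd[OF that(2)])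
      also have "\<dots> < e^2" by (rule N[OF that(1)])
      finally have "(LINT u|Mi. \<bar>s b u - s a u\<bar>)^2 < e^2" .
      from power2_less_imp_less[OF this] e show ?thesis by simp
    qed
    show ?thesis
    proof (intro exI allI impI)
      fix i j assume "i \<ge> N" "j \<ge> N"
      show "(LINT u|Mi. norm (s i u - s j u)) < e"
      proof (cases "j \<le> i")
        case True then show ?thesis using aux[of j i] \<open>j \<ge> N\<close> by simp
      next
        case False
        then have "(LINT u|Mi. \<bar>s j u - s i u\<bar>) < e" using aux[of i j] \<open>i \<ge> N\<close> by simp
        then show ?thesis by (simp add: abs_minus_commute)
      qed
    qed
  qed
  obtain r where r: "strict_mono r" and rC: "AE u in Mi. Cauchy (\<lambda>i. s (r i) u)"
    using cauchy_L1_AE_cauchy_subseq[of Mi s, OF s_int L1C] by blast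
  define H where "H u = lim (\<lambda>i. s (r i) u)" for u
  have H_meas[measurable]: "H \<in> borel_measurable Mi"
    unfolding H_def by (rule borel_measurable_lim_metric) simp
  have conv: "AE u in Mi. (\<lambda>i. s (r i) u) \<longlonglongrightarrow> H u"
    using rC by eventually_elim (simp add: H_def Cauchy_convergent_iff convergent_LIMSEQ_iff)
  have fatou: "(\<integral>\<^sup>+u. ennreal ((H u - s N u)^2) \<partial>Mi) \<le> ennreal (T N)" for N
  proof -
    have "AE u in Mi. ennreal ((H u - s N u)^2) = liminf (\<lambda>i. ennreal ((s (r i) u - s N u)^2))"
      using conv
    proof eventually_elim
      case (elim u)
      have "(\<lambda>i. ennreal ((s (r i) u - s N u)^2)) \<longlonglongrightarrow> ennreal ((H u - s N u)^2)"
        by (intro tendsto_ennrealI tendsto_power tendsto_diff elim tendsto_const)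
      from lim_imp_Liminf[OF trivial_limit_sequentially this] show ?case by simp
    qed
    then have "(\<integral>\<^sup>+u. ennreal ((H u - s N u)^2) \<partial>Mi) = (\<integral>\<^sup>+u. liminf (\<lambda>i. ennreal ((s (r i) u - s N u)^2)) \<partial>Mi)"
      by (rule nn_integral_cong_AE)
    also have "\<dots> \<le> liminf (\<lambda>i. \<integral>\<^sup>+u. ennreal ((s (r i) u - s N u)^2) \<partial>Mi)"
      by (rule nn_integral_liminf) simp
    also have "\<dots> \<le> liminf (\<lambda>i. ennreal (T N))"
    proof (rule Liminf_mono)
      have "eventually (\<lambda>i. r i \<ge> N) sequentially"
        using eventually_ge_at_top[of N] by eventually_elim (rule le_trans[OF _ seq_suble[OF r]])
      then show "\<forall>\<^sub>F i in sequentially. (\<integral>\<^sup>+u. ennreal ((s (r i) u - s N u)^2) \<partial>Mi) \<le> ennreal (T N)"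
      proof eventually_elim
        case (elim i)
        have "integrable Mi (\<lambda>u. (s (r i) u - s N u)^2)"
          by (intro sq_int_sq sq_int_diff s_sq)
        then have "(\<integral>\<^sup>+u. ennreal ((s (r i) u - s N u)^2) \<partial>Mi) = ennreal (LINT u|Mi. (s (r i) u - s N u)^2)"
          by (intro nn_integral_eq_integral) auto
        also have "(LINT u|Mi. (s (r i) u - s N u)^2) = L2inner (\<lambda>u. s (r i) u - s N u) (\<lambda>u. s (r i) u - s N u)"
          by (simp add: L2inner_Mi power2_eq_square)
        also have "\<dots> \<le> T N" by (rule nd[OF elim])
        finally show ?case by (simp add: ennreal_leI)
      qed
    qed
    also have "\<dots> = ennreal (T N)" by (simp add: Liminf_const)
    finally show ?thesis .
  qed
  have gint: "integrable Mi (\<lambda>u. (H u - s N u)^2)" for N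
  proof (rule integrableI_bounded)
    show "(\<lambda>u. (H u - s N u)^2) \<in> borel_measurable Mi" by simp
    have "(\<integral>\<^sup>+u. ennreal (norm ((H u - s N u)^2)) \<partial>Mi) = (\<integral>\<^sup>+u. ennreal ((H u - s N u)^2) \<partial>Mi)"
      by simp
    also have "\<dots> < \<infinity>" using fatou[of N] by (simp add: le_less_trans)
    finally show "(\<integral>\<^sup>+u. ennreal (norm ((H u - s N u)^2)) \<partial>Mi) < \<infinity>" .
  qed
  have Hd_sq: "(\<lambda>u. H u - s N u) \<in> sq_int" for N
    using gint[of N] by (simp add: sq_int_iff)
  have H_sq: "H \<in> sq_int"
  proof -
    have "(\<lambda>u. (H u - s 0 u) + s 0 u) \<in> sq_int" by (intro sq_int_add Hd_sq s_sq)
    then show ?thesis by simp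
  qed
  have Hnorm: "L2inner (\<lambda>u. H u - s N u) (\<lambda>u. H u - s N u) \<le> T N" for N
  proof -
    have "ennreal (LINT u|Mi. (H u - s N u)^2) = (\<integral>\<^sup>+u. ennreal ((H u - s N u)^2) \<partial>Mi)"
      by (intro nn_integral_eq_integral[symmetric] gint) auto
    also have "\<dots> \<le> ennreal (T N)" by (rule fatou)
    finally have "(LINT u|Mi. (H u - s N u)^2) \<le> T N"
      using T_nonneg[of N] by (simp add: ennreal_le_iff)
    then show ?thesis by (simp add: L2inner_Mi power2_eq_square)
  qed
  have coefH: "coef H m = x m" for m
  proof -
    have "\<bar>coef H m - x m\<bar> \<le> sqrt (T N)" if "N > m" for N
    proof -
      have "coef (\<lambda>u. 1 * H u + (-1) * s N u) m = 1 * coef H m + (-1) * coef (s N) m"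
        using coef_lin[OF H_sq s_sq[of N], of 1 "-1"] by simp
      then have "coef (\<lambda>u. 1 * H u + (-1) * s N u) m = coef H m - x m"
        using that by (simp add: s_def coef_Pn)
      then have "\<bar>coef H m - x m\<bar> = \<bar>coef (\<lambda>u. H u - s N u) m\<bar>" by simp
      also have "\<dots> \<le> sqrt (L2inner (\<lambda>u. H u - s N u) (\<lambda>u. H u - s N u))"
        by (rule coef_abs_le[OF Hd_sq])
      also have "\<dots> \<le> sqrt (T N)" by (intro real_sqrt_le_mono Hnorm)
      finally show ?thesis .
    qed
    moreover have "(\<lambda>N. sqrt (T N)) \<longlonglongrightarrow> 0"
      using tendsto_real_sqrt[OF T_tend] by simp
    ultimately have "\<bar>coef H m - x m\<bar> \<le> 0"
      by (intro LIMSEQ_le_const[of "\<lambda>N. sqrt (T N)"]) (auto intro!: exI[of _ "Suc m"])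
    then show ?thesis by simp
  qed
  show ?thesis
    using H_sq coefH Hnorm unfolding T_def s_def by blast
qed

end


lemma L2inner_diff_sq:
  assumes "F \<in> sq_int" "G \<in> sq_int"
  shows "L2inner (\<lambda>u. F u - G u) (\<lambda>u. F u - G u) = L2inner F F - 2 * L2inner F G + L2inner G G"
proof -
  have d: "(\<lambda>u. F u - G u) = (\<lambda>u. 1 * F u + (-1) * G u)" by simp
  have ds: "(\<lambda>u. 1 * F u + (-1) * G u) \<in> sq_int" using assms by (rule sq_int_lin)
  have "L2inner (\<lambda>u. 1 * F u + (-1) * G u) (\<lambda>u. 1 * F u + (-1) * G u)
      = 1 * L2inner F (\<lambda>u. 1 * F u + (-1) * G u) + (-1) * L2inner G (\<lambda>u. 1 * F u + (-1) * G u)"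
    using assms ds by (rule L2inner_lin)
  also have "L2inner F (\<lambda>u. 1 * F u + (-1) * G u) = 1 * L2inner F F + (-1) * L2inner F G"
    using assms by (intro L2inner_lin2)
  also have "L2inner G (\<lambda>u. 1 * F u + (-1) * G u) = 1 * L2inner G F + (-1) * L2inner G G"
    using assms by (intro L2inner_lin2)
  finally show ?thesis unfolding d by (simp add: L2inner_sym[of G F])
qed

lemma sq_int_affine: "(\<lambda>u. A + B * u) \<in> sq_int"
proof -
  have m: "(\<lambda>u::real. u) \<in> borel_measurable Mi" by (rule measurable_restrict_space1) simp
  have "(\<lambda>u. u) \<in> sq_int"
  proof -
    have "integrable Mi (\<lambda>u::real. u^2)"
    proof (rule Mi.integrable_const_bound[where B=1])
      show "AE x in Mi. norm (x^2) \<le> 1"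
        by (rule AE_I2) (auto simp: space_restrict_space abs_square_le_1)
      from borel_measurable_power[OF m, of 2] show "(\<lambda>u::real. u^2) \<in> borel_measurable Mi" .
    qed
    then show ?thesis using m by (simp add: sq_int_iff)
  qed
  from sq_int_lin[OF sq_int_const[of 1] this, of A B] show ?thesis by simp
qed

lemma hprof_sq: "hprof \<beta> \<alpha> \<alpha>L \<alpha>R thL thR \<in> sq_int"
proof -
  have "\<exists>A B. hprof \<beta> \<alpha> \<alpha>L \<alpha>R thL thR = (\<lambda>u. A + B * u)"
  proof (cases "\<beta> < 1")
    case True then show ?thesis by (auto simp: hprof_def fun_eq_iff)
  next
    case False
    show ?thesis
    proof (cases "\<beta> = 1")
      case True
      let ?c = "\<alpha> / \<alpha>L + 1 + \<alpha> / \<alpha>R"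
      have "hprof \<beta> \<alpha> \<alpha>L \<alpha>R thL thR = (\<lambda>u. (thL + (thR - thL) * (\<alpha> / \<alpha>L) / ?c) + ((thR - thL) / ?c) * u)"
        using True by (auto simp: hprof_def fun_eq_iff add_divide_distrib algebra_simps)
      then show ?thesis by blast
    next
      case F2: False
      have "hprof \<beta> \<alpha> \<alpha>L \<alpha>R thL thR = (\<lambda>u. (\<alpha>L * thL + \<alpha>R * thR) / (\<alpha>L + \<alpha>R) + 0 * u)"
        using F2 False by (auto simp: hprof_def fun_eq_iff)
      then show ?thesis by blast
    qed
  qed
  then show ?thesis using sq_int_affine by auto
qed

lemma hdu_L2: "hdu \<beta> \<alpha> \<alpha>L \<alpha>R thL thR G = L2inner G (hprof \<beta> \<alpha> \<alpha>L \<alpha>R thL thR)"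
  by (simp add: hdu_Mi L2inner_Mi)

context eb begin

lemma Bessel: "F \<in> sq_int \<Longrightarrow> (\<Sum>n<N. (coef F n)^2) \<le> L2inner F F"
proof -
  assume F: "F \<in> sq_int"
  let ?s = "Pn (coef F) {..<N}"
  have "0 \<le> L2inner (\<lambda>u. F u - ?s u) (\<lambda>u. F u - ?s u)" by (rule L2inner_nonneg)
  also have "\<dots> = L2inner F F - 2 * L2inner F ?s + L2inner ?s ?s"
    by (rule L2inner_diff_sq[OF F Pn_sq])
  also have "L2inner ?s ?s = (\<Sum>n<N. (coef F n)^2)" by (simp add: Pn_norm)
  also have "L2inner F ?s = (\<Sum>n<N. (coef F n)^2)"
  proof -
    have "L2inner F ?s = L2inner ?s F" by (rule L2inner_sym)
    also have "\<dots> = (\<Sum>n<N. coef F n * L2inner (\<psi> n) F)"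
      unfolding Pn_def by (intro L2inner_sum psi_sq F)
    also have "\<dots> = (\<Sum>n<N. (coef F n)^2)"
      by (simp add: coef_def L2inner_sym[of "\<psi> _"] power2_eq_square)
    finally show ?thesis .
  qed
  finally show ?thesis by simp
qed

lemma coef_summable: "F \<in> sq_int \<Longrightarrow> summable (\<lambda>n. (coef F n)^2)"
  by (rule summableI_nonneg_bounded[where x="L2inner F F"]) (auto intro: Bessel)

lemma Parseval_le: "F \<in> sq_int \<Longrightarrow> L2inner F F \<le> (\<Sum>n. (coef F n)^2)"
proof -
  assume F: "F \<in> sq_int"
  obtain H where H: "H \<in> sq_int" "\<And>m. coef H m = coef F m"
    and Hn: "\<And>N. L2inner (\<lambda>u. H u - Pn (coef F) {..<N} u) (\<lambda>u. H u - Pn (coef F) {..<N} u)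
            \<le> (\<Sum>n. (coef F n)^2) - (\<Sum>n<N. (coef F n)^2)"
    using RF[OF coef_summable[OF F]] by blast
  have d: "(\<lambda>u. 1 * F u + (-1) * H u) \<in> sq_int" by (rule sq_int_lin[OF F H(1)])
  have "coef (\<lambda>u. 1 * F u + (-1) * H u) n = 0" for n
    using coef_lin[OF F H(1), of 1 "-1"] H(2) by simp
  then have "AE u in lborel. u \<in> {0..1} \<longrightarrow> 1 * F u + (-1) * H u = 0"
    using compl[OF d] unfolding coef_def by blast
  then have ae: "AE u in Mi. F u = H u"
    by (subst AE_restrict_space_iff) auto
  have m1: "(\<lambda>u. F u * F u) \<in> borel_measurable Mi" by (intro borel_measurable_times sq_int_meas F)
  have m2: "(\<lambda>u. H u * H u) \<in> borel_measurable Mi" by (intro borel_measurable_times sq_int_meas H(1))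
  have "AE u in Mi. F u * F u = H u * H u" using ae by eventually_elim simp
  then have "L2inner F F = L2inner H H"
    unfolding L2inner_Mi by (rule integral_cong_AE[OF m1 m2])
  also have "\<dots> = L2inner (\<lambda>u. H u - Pn (coef F) {..<0} u) (\<lambda>u. H u - Pn (coef F) {..<0} u)"
    by (simp add: Pn_def)
  also have "\<dots> \<le> (\<Sum>n. (coef F n)^2)" using Hn[of 0] by simp
  finally show ?thesis .
qed

lemma Sspace_L2_le: "F \<in> Sspace \<psi> lam \<Longrightarrow> L2inner F F \<le> nrm 0 (coef F)"
  using Parseval_le[of F] by (simp add: Sspace_iff nrm_def)

lemma nrm_mono_k: "x \<in> Sseq \<Longrightarrow> k \<le> k' \<Longrightarrow> nrm k x \<le> nrm k' x"
  unfolding nrm_def by (intro suminf_le Sseq_summ mult_right_mono w_mono) auto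

lemma Sdual_comb:
  assumes d1: "d1 \<in> Sdual \<psi> lam" and d2: "d2 \<in> Sdual \<psi> lam"
  shows "(\<lambda>F. if F \<in> Sspace \<psi> lam then a * d1 F + b * d2 F else 0) \<in> Sdual \<psi> lam"
proof -
  obtain k1 C1 where C1: "C1 \<ge> 0" and b1: "\<And>F. F \<in> Sspace \<psi> lam \<Longrightarrow> \<bar>d1 F\<bar> \<le> C1 * sqrt (nrm k1 (coef F))"
    using Sdual_bound[OF d1] by blast
  obtain k2 C2 where C2: "C2 \<ge> 0" and b2: "\<And>F. F \<in> Sspace \<psi> lam \<Longrightarrow> \<bar>d2 F\<bar> \<le> C2 * sqrt (nrm k2 (coef F))"
    using Sdual_bound[OF d2] by blast
  let ?k = "max k1 k2"
  have bnd: "\<bar>a * d1 F + b * d2 F\<bar> \<le> (\<bar>a\<bar> * C1 + \<bar>b\<bar> * C2) * sqrt (Snorm_sq \<psi> lam ?k F)"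
    if F: "F \<in> Sspace \<psi> lam" for F
  proof -
    have cs: "coef F \<in> Sseq" using F by (simp add: Sspace_iff)
    have s1: "sqrt (nrm k1 (coef F)) \<le> sqrt (nrm ?k (coef F))"
      by (intro real_sqrt_le_mono nrm_mono_k cs) simp
    have s2: "sqrt (nrm k2 (coef F)) \<le> sqrt (nrm ?k (coef F))"
      by (intro real_sqrt_le_mono nrm_mono_k cs) simp
    have "\<bar>a * d1 F + b * d2 F\<bar> \<le> \<bar>a\<bar> * \<bar>d1 F\<bar> + \<bar>b\<bar> * \<bar>d2 F\<bar>"
      by (simp add: abs_mult[symmetric] abs_triangle_ineq)
    also have "\<dots> \<le> \<bar>a\<bar> * (C1 * sqrt (nrm ?k (coef F))) + \<bar>b\<bar> * (C2 * sqrt (nrm ?k (coef F)))"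
    proof (intro add_mono mult_left_mono)
      show "\<bar>d1 F\<bar> \<le> C1 * sqrt (nrm ?k (coef F))"
        using b1[OF F] mult_left_mono[OF s1 C1] by linarith
      show "\<bar>d2 F\<bar> \<le> C2 * sqrt (nrm ?k (coef F))"
        using b2[OF F] mult_left_mono[OF s2 C2] by linarith
    qed auto
    also have "\<dots> = (\<bar>a\<bar> * C1 + \<bar>b\<bar> * C2) * sqrt (Snorm_sq \<psi> lam ?k F)"
      by (simp add: Snorm_eq algebra_simps)
    finally show ?thesis .
  qed
  show ?thesis
    unfolding Sdual_def
  proof (intro CollectI conjI ballI allI impI)
    fix F G c e assume F: "F \<in> Sspace \<psi> lam" and G: "G \<in> Sspace \<psi> lam"
    have "(\<lambda>u. c * F u + e * G u) \<in> Sspace \<psi> lam" by (rule Sspace_lin[OF F G])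
    then show "(if (\<lambda>u. c * F u + e * G u) \<in> Sspace \<psi> lam then a * d1 (\<lambda>u. c * F u + e * G u) + b * d2 (\<lambda>u. c * F u + e * G u) else 0) =
       c * (if F \<in> Sspace \<psi> lam then a * d1 F + b * d2 F else 0) + e * (if G \<in> Sspace \<psi> lam then a * d1 G + b * d2 G else 0)"
      using F G by (simp add: Sdual_lin[OF d1 F G] Sdual_lin[OF d2 F G] algebra_simps)
  next
    show "\<exists>k C. \<forall>F\<in>Sspace \<psi> lam. \<bar>if F \<in> Sspace \<psi> lam then a * d1 F + b * d2 F else 0\<bar> \<le> C * sqrt (Snorm_sq \<psi> lam k F)"
      using bnd by auto
  next
    fix F assume "F \<notin> Sspace \<psi> lam"
    then show "(if F \<in> Sspace \<psi> lam then a * d1 F + b * d2 F else 0) = 0" by simp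
  qed
qed

lemma hd_Sdual:
  "(\<lambda>F. if F \<in> Sspace \<psi> lam then hdu \<beta> \<alpha> \<alpha>L \<alpha>R thL thR F else 0) \<in> Sdual \<psi> lam"
proof -
  let ?h = "hprof \<beta> \<alpha> \<alpha>L \<alpha>R thL thR"
  have bnd: "\<bar>hdu \<beta> \<alpha> \<alpha>L \<alpha>R thL thR F\<bar> \<le> sqrt (L2inner ?h ?h) * sqrt (Snorm_sq \<psi> lam 0 F)"
    if F: "F \<in> Sspace \<psi> lam" for F
  proof -
    have Fs: "F \<in> sq_int" using F by (simp add: Sspace_iff)
    have "\<bar>hdu \<beta> \<alpha> \<alpha>L \<alpha>R thL thR F\<bar> \<le> sqrt (L2inner F F) * sqrt (L2inner ?h ?h)"
      unfolding hdu_L2 by (rule L2inner_abs_le[OF Fs hprof_sq])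
    also have "\<dots> \<le> sqrt (Snorm_sq \<psi> lam 0 F) * sqrt (L2inner ?h ?h)"
      by (intro mult_right_mono real_sqrt_le_mono) (simp_all add: Snorm_eq Sspace_L2_le F L2inner_nonneg)
    finally show ?thesis by (simp add: mult.commute)
  qed
  show ?thesis
    unfolding Sdual_def
  proof (intro CollectI conjI ballI allI impI)
    fix F G c e assume F: "F \<in> Sspace \<psi> lam" and G: "G \<in> Sspace \<psi> lam"
    have "(\<lambda>u. c * F u + e * G u) \<in> Sspace \<psi> lam" by (rule Sspace_lin[OF F G])
    moreover have "hdu \<beta> \<alpha> \<alpha>L \<alpha>R thL thR (\<lambda>u. c * F u + e * G u) = c * hdu \<beta> \<alpha> \<alpha>L \<alpha>R thL thR F + e * hdu \<beta> \<alpha> \<alpha>L \<alpha>R thL thR G"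
      unfolding hdu_L2 using F G by (intro L2inner_lin hprof_sq) (auto simp: Sspace_iff)
    ultimately show "(if (\<lambda>u. c * F u + e * G u) \<in> Sspace \<psi> lam then hdu \<beta> \<alpha> \<alpha>L \<alpha>R thL thR (\<lambda>u. c * F u + e * G u) else 0) =
       c * (if F \<in> Sspace \<psi> lam then hdu \<beta> \<alpha> \<alpha>L \<alpha>R thL thR F else 0) + e * (if G \<in> Sspace \<psi> lam then hdu \<beta> \<alpha> \<alpha>L \<alpha>R thL thR G else 0)"
      using F G by simp
  next
    show "\<exists>k C. \<forall>F\<in>Sspace \<psi> lam. \<bar>if F \<in> Sspace \<psi> lam then hdu \<beta> \<alpha> \<alpha>L \<alpha>R thL thR F else 0\<bar> \<le> C * sqrt (Snorm_sq \<psi> lam k F)"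
      using bnd by auto
  next
    fix F assume "F \<notin> Sspace \<psi> lam"
    then show "(if F \<in> Sspace \<psi> lam then hdu \<beta> \<alpha> \<alpha>L \<alpha>R thL thR F else 0) = 0" by simp
  qed
qed

lemma opA_prop:
  assumes G: "G \<in> Sspace \<psi> lam"
  shows "opA \<psi> lam G \<in> Sspace \<psi> lam \<and> coef (opA \<psi> lam G) = (\<lambda>n. - lam n * coef G n)"
proof -
  have cs: "coef G \<in> Sseq" using G by (simp add: Sspace_iff)
  let ?x = "\<lambda>n. (-1) * (lam n * coef G n)"
  have xs: "?x \<in> Sseq" using Sseq_mult_bounded[OF Sseq_lam_mult[OF cs], of "\<lambda>n. -1" 1] by simp
  have "summable (\<lambda>n. (?x n)^2)" using Sseq_summ[OF xs, of 0] by simp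
  from RF[OF this] obtain H where H: "H \<in> sq_int" "\<And>m. coef H m = ?x m" by blast
  have cH: "coef H = ?x" using H(2) by (simp add: fun_eq_iff)
  have cHs: "coef H \<in> Sseq" using xs by (simp add: cH)
  have "H \<in> Sspace \<psi> lam" using H(1) cHs by (simp add: Sspace_iff)
  moreover have "\<forall>n. L2inner H (\<psi> n) = - lam n * L2inner G (\<psi> n)" using H(2) by (simp add: coef_def)
  ultimately have "H \<in> Sspace \<psi> lam \<and> (\<forall>n. L2inner H (\<psi> n) = - lam n * L2inner G (\<psi> n))" by blast
  then have "\<exists>H. H \<in> Sspace \<psi> lam \<and> (\<forall>n. L2inner H (\<psi> n) = - lam n * L2inner G (\<psi> n))" by blast
  from someI_ex[OF this] show ?thesis
    unfolding opA_def by (auto simp: coef_def fun_eq_iff)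
qed

end


lemma ode_unique:
  fixes f :: "real \<Rightarrow> real"
  assumes h: "\<And>t. t \<ge> 0 \<Longrightarrow> (\<lambda>s. - l * f s) integrable_on {0..t} \<and> f t = c + integral {0..t} (\<lambda>s. - l * f s)"
    and t: "t \<ge> 0"
  shows "f t = c * exp (- l * t)"
proof -
  have int: "(\<lambda>s. - l * f s) integrable_on {0..t}" using h[OF t] by blast
  have fe: "f x = c + integral {0..x} (\<lambda>s. - l * f s)" if "x \<in> {0..t}" for x
    using h[of x] that by auto
  have cI: "continuous_on {0..t} (\<lambda>x. integral {0..x} (\<lambda>s. - l * f s))"
    by (rule indefinite_integral_continuous_1[OF int])
  have cf: "continuous_on {0..t} f"
  proof -
    have "continuous_on {0..t} (\<lambda>x. c + integral {0..x} (\<lambda>s. - l * f s))"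
      by (intro continuous_on_add continuous_on_const cI)
    then show ?thesis by (rule continuous_on_eq) (simp add: fe)
  qed
  have cg: "continuous_on {0..t} (\<lambda>s. - l * f s)"
    by (intro continuous_on_mult continuous_on_const cf)
  have df: "(f has_field_derivative (- l * f x)) (at x within {0..t})" if x: "x \<in> {0..t}" for x
  proof -
    have "((\<lambda>u. integral {0..u} (\<lambda>s. - l * f s)) has_vector_derivative (- l * f x)) (at x within {0..t})"
      by (rule integral_has_vector_derivative[OF cg x])
    then have "((\<lambda>u. integral {0..u} (\<lambda>s. - l * f s)) has_field_derivative (- l * f x)) (at x within {0..t})"
      by (simp add: has_real_derivative_iff_has_vector_derivative)
    then have "((\<lambda>u. c + integral {0..u} (\<lambda>s. - l * f s)) has_field_derivative (- l * f x)) (at x within {0..t})"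
      using DERIV_add[OF DERIV_const] by fastforce
    then show ?thesis
      by (rule has_field_derivative_transform_within[where d=1]) (use x fe in auto)
  qed
  define q where "q x = f x * exp (l * x)" for x
  have dq: "(q has_field_derivative 0) (at x within {0..t})" if x: "x \<in> {0..t}" for x
  proof -
    have e: "((\<lambda>x. exp (l * x)) has_field_derivative (exp (l * x) * l)) (at x within {0..t})"
      by (rule DERIV_chain2[where f=exp and g="\<lambda>x. l * x"]) (auto intro!: derivative_eq_intros)
    from DERIV_mult'[OF df[OF x] e] show ?thesis
      unfolding q_def by (simp add: algebra_simps)
  qed
  obtain C where C: "\<And>x. x \<in> {0..t} \<Longrightarrow> q x = C"
    using has_field_derivative_zero_constant[of "{0..t}" q] dq by auto
  have "q 0 = c" using fe[of 0] t by (simp add: q_def)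
  then have "q t = c" using C[of 0] C[of t] t by simp
  then show ?thesis unfolding q_def by (simp add: exp_minus field_simps)
qed

lemma exp_diff_le:
  fixes x y :: real
  assumes "x \<ge> 0" "y \<ge> 0"
  shows "\<bar>exp (- x) - exp (- y)\<bar> \<le> \<bar>x - y\<bar>"
proof -
  have main: "\<bar>exp (- a) - exp (- b)\<bar> \<le> \<bar>a - b\<bar>" if ab: "0 \<le> a" "a \<le> b" for a b :: real
  proof -
    have "exp (- b) = exp (- a) * exp (a - b)" by (simp add: exp_add[symmetric])
    moreover have "1 - (b - a) \<le> exp (a - b)" using exp_ge_add_one_self[of "a - b"] by linarith
    moreover have "exp (a - b) \<le> 1" using ab by simp
    moreover have "exp (- a) \<le> 1" "exp (-a) > 0" using ab by auto
    ultimately have e: "exp (- a) - exp (- b) = exp (- a) * (1 - exp (a - b))"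
      "0 \<le> 1 - exp (a - b)" "1 - exp (a - b) \<le> b - a" "exp (- a) \<le> 1" "exp (-a) > 0"
      by (auto simp: algebra_simps)
    have "exp (- a) * (1 - exp (a - b)) \<le> 1 * (b - a)"
      by (rule mult_mono) (use e in auto)
    moreover have "0 \<le> exp (- a) * (1 - exp (a - b))" using e by simp
    ultimately have "0 \<le> exp (- a) - exp (- b)" "exp (- a) - exp (- b) \<le> b - a"
      using e(1) by auto
    then show ?thesis using ab by simp
  qed
  show ?thesis
  proof (cases "x \<le> y")
    case True then show ?thesis using main assms by blast
  next
    case False then show ?thesis using main[of y x] assms by (simp add: abs_minus_commute)
  qed
qed

lemma exp_neg_le1: "l \<ge> 0 \<Longrightarrow> t \<ge> 0 \<Longrightarrow> \<bar>exp (- l * t)\<bar> \<le> (1::real)"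
  by simp



context eb begin

lemma Lam_fin:
  assumes d: "d \<in> Sdual \<psi> lam" and x: "\<And>n. n \<ge> N \<Longrightarrow> x n = 0"
  shows "Lam d x = (\<Sum>n<N. x n * d (\<psi> n))"
proof -
  have xs: "x \<in> Sseq" using x by (intro Sseq_fin[of "{..<N}"]) auto
  have "(\<lambda>M. \<Sum>n<M. x n * d (\<psi> n)) \<longlonglongrightarrow> (\<Sum>n<N. x n * d (\<psi> n))"
  proof (rule LIMSEQ_offset[where k=N])
    have "(\<Sum>n<M + N. x n * d (\<psi> n)) = (\<Sum>n<N. x n * d (\<psi> n))" for M
      using x by (intro sum.mono_neutral_right) auto
    then show "(\<lambda>M. \<Sum>n<M + N. x n * d (\<psi> n)) \<longlonglongrightarrow> (\<Sum>n<N. x n * d (\<psi> n))" by simp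
  qed
  then show ?thesis using Lam_conv[OF d xs] LIMSEQ_unique by blast
qed

lemma nrm_tail:
  assumes x: "x \<in> Sseq"
  shows "nrm k (\<lambda>n. if n < N then 0 else x n) = nrm k x - (\<Sum>n<N. w k n * (x n)^2)"
proof -
  have sm: "summable (\<lambda>n. w k n * (x n)^2)" by (rule Sseq_summ[OF x])
  have "(\<lambda>n. w k n * (if n < N then 0 else x n)^2) = (\<lambda>n. w k n * (x n)^2 - (if n < N then w k n * (x n)^2 else 0))"
    by auto
  then have "nrm k (\<lambda>n. if n < N then 0 else x n) = (\<Sum>n. w k n * (x n)^2 - (if n < N then w k n * (x n)^2 else 0))"
    unfolding nrm_def by simp
  also have "\<dots> = nrm k x - (\<Sum>n. (if n < N then w k n * (x n)^2 else 0))"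
    unfolding nrm_def by (rule suminf_diff[symmetric, OF sm summable_finite[of "{..<N}"]]) auto
  also have "(\<Sum>n. (if n < N then w k n * (x n)^2 else 0)) = (\<Sum>n<N. w k n * (x n)^2)"
    by (subst suminf_finite[of "{..<N}"]) auto
  finally show ?thesis .
qed

lemma nrm_tail_tend:
  assumes x: "x \<in> Sseq"
  shows "(\<lambda>N. nrm k (\<lambda>n. if n < N then 0 else x n)) \<longlonglongrightarrow> 0"
proof -
  have "(\<lambda>N. \<Sum>n<N. w k n * (x n)^2) \<longlonglongrightarrow> nrm k x"
    unfolding nrm_def by (rule summable_LIMSEQ[OF Sseq_summ[OF x]])
  then have "(\<lambda>N. nrm k x - (\<Sum>n<N. w k n * (x n)^2)) \<longlonglongrightarrow> nrm k x - nrm k x"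
    by (intro tendsto_diff tendsto_const)
  then show ?thesis by (simp add: nrm_tail[OF x])
qed

lemma E_le1: "t \<ge> 0 \<Longrightarrow> \<bar>exp (- lam n * t)\<bar> \<le> 1"
  using lam_nonneg[of n] by (simp add: mult_nonneg_nonneg)

lemma Eseq: "t \<ge> 0 \<Longrightarrow> x \<in> Sseq \<Longrightarrow> (\<lambda>n. exp (- lam n * t) * x n) \<in> Sseq"
  by (rule Sseq_mult_bounded[OF _ E_le1])

lemma Lam_same:
  assumes "\<And>n. d1 (\<psi> n) = d2 (\<psi> n)"
  shows "Lam d1 x = Lam d2 x"
  unfolding Lam_def using assms by simp

end

locale sol = eb +
  fixes thL thR :: real and \<theta>0 :: "(real \<Rightarrow> real) \<Rightarrow> real"
  assumes th0: "\<theta>0 \<in> Sdual \<psi> lam"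
begin

abbreviation hdl :: "(real \<Rightarrow> real) \<Rightarrow> real" where "hdl \<equiv> hdu \<beta> \<alpha> \<alpha>L \<alpha>R thL thR"

definition dd :: "(real \<Rightarrow> real) \<Rightarrow> real" where
  "dd F = (if F \<in> Sspace \<psi> lam then \<theta>0 F - hdl F else 0)"

lemma dd_Sdual: "dd \<in> Sdual \<psi> lam"
proof -
  have "(\<lambda>F. if F \<in> Sspace \<psi> lam then 1 * \<theta>0 F + (-1) * (if F \<in> Sspace \<psi> lam then hdl F else 0) else 0) \<in> Sdual \<psi> lam"
    by (rule Sdual_comb[OF th0 hd_Sdual])
  moreover have "(\<lambda>F. if F \<in> Sspace \<psi> lam then 1 * \<theta>0 F + (-1) * (if F \<in> Sspace \<psi> lam then hdl F else 0) else 0) = dd"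
    by (auto simp: dd_def fun_eq_iff)
  ultimately show ?thesis by simp
qed

definition gg :: "real \<Rightarrow> (real \<Rightarrow> real) \<Rightarrow> real" where
  "gg t F = (if F \<in> Sspace \<psi> lam then Lam dd (\<lambda>n. exp (- lam n * t) * coef F n) else 0)"

definition th :: "real \<Rightarrow> (real \<Rightarrow> real) \<Rightarrow> real" where
  "th t F = (if F \<in> Sspace \<psi> lam then hdl F + gg t F else 0)"

lemma gg_Sdual:
  assumes t: "t \<ge> 0"
  shows "gg t \<in> Sdual \<psi> lam"
proof -
  obtain k C where C: "C \<ge> 0" and b: "\<And>F. F \<in> Sspace \<psi> lam \<Longrightarrow> \<bar>dd F\<bar> \<le> C * sqrt (nrm k (coef F))"
    using Sdual_bound[OF dd_Sdual] by blast
  show ?thesis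
    unfolding Sdual_def
  proof (intro CollectI conjI ballI allI impI)
    fix F G a c assume F: "F \<in> Sspace \<psi> lam" and G: "G \<in> Sspace \<psi> lam"
    have cF: "coef F \<in> Sseq" and cG: "coef G \<in> Sseq" and sF: "F \<in> sq_int" and sG: "G \<in> sq_int"
      using F G by (auto simp: Sspace_iff)
    have FG: "(\<lambda>u. a * F u + c * G u) \<in> Sspace \<psi> lam" by (rule Sspace_lin[OF F G])
    have "(\<lambda>n. exp (- lam n * t) * coef (\<lambda>u. a * F u + c * G u) n) =
          (\<lambda>n. a * (exp (- lam n * t) * coef F n) + c * (exp (- lam n * t) * coef G n))"
      by (simp add: coef_lin[OF sF sG] algebra_simps)
    then have "Lam dd (\<lambda>n. exp (- lam n * t) * coef (\<lambda>u. a * F u + c * G u) n) =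
        a * Lam dd (\<lambda>n. exp (- lam n * t) * coef F n) + c * Lam dd (\<lambda>n. exp (- lam n * t) * coef G n)"
      using Lam_lin[OF dd_Sdual Eseq[OF t cF] Eseq[OF t cG], of a c] by simp
    then show "gg t (\<lambda>u. a * F u + c * G u) = a * gg t F + c * gg t G"
      using F G FG by (simp add: gg_def)
  next
    have "\<bar>gg t F\<bar> \<le> C * sqrt (Snorm_sq \<psi> lam k F)" if F: "F \<in> Sspace \<psi> lam" for F
    proof -
      have cF: "coef F \<in> Sseq" using F by (simp add: Sspace_iff)
      have "\<bar>gg t F\<bar> \<le> C * sqrt (nrm k (\<lambda>n. exp (- lam n * t) * coef F n))"
        using F Lam_bound[OF dd_Sdual Eseq[OF t cF] C b] by (simp add: gg_def)
      also have "\<dots> \<le> C * sqrt (nrm k (coef F))"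
        by (intro mult_left_mono C real_sqrt_le_mono nrm_mono_mult cF E_le1 t)
      finally show ?thesis by (simp add: Snorm_eq)
    qed
    then show "\<exists>k C. \<forall>F\<in>Sspace \<psi> lam. \<bar>gg t F\<bar> \<le> C * sqrt (Snorm_sq \<psi> lam k F)" by blast
  next
    fix F assume "F \<notin> Sspace \<psi> lam" then show "gg t F = 0" by (simp add: gg_def)
  qed
qed

lemma th_Sdual: "t \<ge> 0 \<Longrightarrow> th t \<in> Sdual \<psi> lam"
proof -
  assume t: "t \<ge> 0"
  have "(\<lambda>F. if F \<in> Sspace \<psi> lam then 1 * (if F \<in> Sspace \<psi> lam then hdl F else 0) + 1 * gg t F else 0) \<in> Sdual \<psi> lam"
    by (rule Sdual_comb[OF hd_Sdual gg_Sdual[OF t]])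
  moreover have "(\<lambda>F. if F \<in> Sspace \<psi> lam then 1 * (if F \<in> Sspace \<psi> lam then hdl F else 0) + 1 * gg t F else 0) = th t"
    by (auto simp: th_def fun_eq_iff)
  ultimately show ?thesis by simp
qed

lemma gg_int:
  assumes G: "G \<in> Sspace \<psi> lam" and t: "t \<ge> 0"
  shows "((\<lambda>s. gg s (opA \<psi> lam G)) has_integral (gg t G - dd G)) {0..t}"
proof -
  define AG where "AG = opA \<psi> lam G"
  have AG: "AG \<in> Sspace \<psi> lam" "coef AG = (\<lambda>n. - lam n * coef G n)"
    using opA_prop[OF G] by (auto simp: AG_def)
  define b where "b = coef G"
  have bs: "b \<in> Sseq" using G by (simp add: Sspace_iff b_def)
  define z where "z n = - lam n * b n" for n
  have zeq: "z = (\<lambda>n. (-1) * (lam n * b n))" by (simp add: fun_eq_iff z_def)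
  have zs: "z \<in> Sseq"
    unfolding zeq by (rule Sseq_mult_bounded[OF Sseq_lam_mult[OF bs], of "\<lambda>n. -1" 1]) simp
  define E where "E s n = exp (- lam n * s)" for s n
  have ggA: "gg s AG = Lam dd (\<lambda>n. E s n * z n)" for s
    using AG by (simp add: gg_def E_def z_def b_def)
  define \<phi> where "\<phi> N s = (\<Sum>n<N. (E s n * z n) * dd (\<psi> n))" for N s
  obtain k C where C: "C \<ge> 0" and bd: "\<And>F. F \<in> Sspace \<psi> lam \<Longrightarrow> \<bar>dd F\<bar> \<le> C * sqrt (nrm k (coef F))"
    using Sdual_bound[OF dd_Sdual] by blast
  have diff: "\<bar>gg s AG - \<phi> N s\<bar> \<le> C * sqrt (nrm k (\<lambda>n. if n < N then 0 else z n))" if s: "s \<ge> 0" for s N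
  proof -
    let ?y = "\<lambda>n. E s n * z n"
    have ys: "?y \<in> Sseq" unfolding E_def by (rule Eseq[OF s zs])
    let ?tr = "\<lambda>n. if n < N then ?y n else 0"
    let ?tl = "\<lambda>n. if n < N then 0 else ?y n"
    have trs: "?tr \<in> Sseq" by (rule Sseq_fin[of "{..<N}"]) auto
    have tls: "?tl \<in> Sseq" using Sseq_lin[OF ys trs, of 1 "-1"] by (simp add: if_distrib cong: if_cong)
    have "?y = (\<lambda>n. 1 * ?tr n + 1 * ?tl n)" by auto
    then have "Lam dd ?y = 1 * Lam dd ?tr + 1 * Lam dd ?tl"
      using Lam_lin[OF dd_Sdual trs tls, of 1 1] by simp
    moreover have "Lam dd ?tr = \<phi> N s"
      unfolding \<phi>_def by (subst Lam_fin[OF dd_Sdual, of N]) auto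
    ultimately have eq1: "gg s AG - \<phi> N s = Lam dd ?tl" using ggA by simp
    have b1: "\<bar>Lam dd ?tl\<bar> \<le> C * sqrt (nrm k ?tl)" by (rule Lam_bound[OF dd_Sdual tls C bd])
    have eq2: "?tl = (\<lambda>n. E s n * (if n < N then 0 else z n))" by auto
    have b2: "nrm k (\<lambda>n. E s n * (if n < N then 0 else z n)) \<le> nrm k (\<lambda>n. if n < N then 0 else z n)"
    proof (rule nrm_mono_mult)
      show "(\<lambda>n. if n < N then 0 else z n) \<in> Sseq"
        using Sseq_lin[OF zs Sseq_fin[of "{..<N}" "\<lambda>n. if n < N then z n else 0"], of 1 "-1"]
        by (simp add: if_distrib cong: if_cong)
      show "\<bar>E s n\<bar> \<le> 1" for n unfolding E_def by (rule E_le1[OF s])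
    qed
    have "C * sqrt (nrm k ?tl) \<le> C * sqrt (nrm k (\<lambda>n. if n < N then 0 else z n))"
      using b2 unfolding eq2[symmetric] by (intro mult_left_mono C real_sqrt_le_mono)
    then show ?thesis using b1 unfolding eq1 by linarith
  qed
  have unif: "uniform_limit (cbox 0 t) \<phi> (\<lambda>s. gg s AG) sequentially"
  proof (rule uniform_limitI)
    fix e :: real assume e: "e > 0"
    have "(\<lambda>N. C * sqrt (nrm k (\<lambda>n. if n < N then 0 else z n))) \<longlonglongrightarrow> C * sqrt 0"
      by (intro tendsto_mult tendsto_const tendsto_real_sqrt nrm_tail_tend zs)
    then have "\<forall>\<^sub>F N in sequentially. C * sqrt (nrm k (\<lambda>n. if n < N then 0 else z n)) < e"
      using e by (simp add: order_tendsto_iff)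
    then show "\<forall>\<^sub>F N in sequentially. \<forall>s\<in>cbox 0 t. dist (\<phi> N s) (gg s AG) < e"
    proof eventually_elim
      case (elim N)
      show ?case
      proof
        fix s assume "s \<in> cbox 0 t"
        then have s: "s \<ge> 0" by simp
        have "dist (\<phi> N s) (gg s AG) = \<bar>gg s AG - \<phi> N s\<bar>" by (simp add: dist_real_def abs_minus_commute)
        also have "\<dots> < e" using diff[OF s, of N] elim by linarith
        finally show "dist (\<phi> N s) (gg s AG) < e" .
      qed
    qed
  qed
  have cont: "continuous_on (cbox 0 t) (\<phi> N)" for N
    unfolding \<phi>_def E_def by (intro continuous_intros)
  obtain I J where I: "\<And>N. (\<phi> N has_integral I N) (cbox 0 t)" and J: "((\<lambda>s. gg s AG) has_integral J) (cbox 0 t)"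
    and IJ: "I \<longlonglongrightarrow> J"
    using uniform_limit_integral_cbox[OF unif cont] by auto
  have Iv: "(\<phi> N has_integral (\<Sum>n<N. (E t n - 1) * b n * dd (\<psi> n))) {0..t}" for N
    unfolding \<phi>_def
  proof (intro has_integral_sum finite_lessThan)
    fix n assume "n \<in> {..<N}"
    have "((\<lambda>s. E s n * b n * dd (\<psi> n)) has_vector_derivative (E s n * z n * dd (\<psi> n))) (at s within {0..t})" for s
      unfolding E_def z_def has_real_derivative_iff_has_vector_derivative[symmetric]
      by (auto intro!: derivative_eq_intros simp: algebra_simps)
    from fundamental_theorem_of_calculus[OF t this]
    show "((\<lambda>s. E s n * z n * dd (\<psi> n)) has_integral (E t n - 1) * b n * dd (\<psi> n)) {0..t}"
      by (simp add: E_def algebra_simps)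
  qed
  have IN: "I N = (\<Sum>n<N. (E t n * b n) * dd (\<psi> n)) - (\<Sum>n<N. b n * dd (\<psi> n))" for N
  proof -
    have "I N = (\<Sum>n<N. (E t n - 1) * b n * dd (\<psi> n))"
      using has_integral_unique[OF I[of N] Iv[of N, unfolded cbox_interval[symmetric]]] .
    then show ?thesis by (simp add: sum_subtractf[symmetric] algebra_simps)
  qed
  have "I \<longlonglongrightarrow> Lam dd (\<lambda>n. E t n * b n) - Lam dd b"
    unfolding IN[abs_def] E_def by (intro tendsto_diff Lam_conv dd_Sdual Eseq[OF t bs] bs)
  then have "J = Lam dd (\<lambda>n. E t n * b n) - Lam dd b" using IJ LIMSEQ_unique by blast
  also have "Lam dd b = dd G" unfolding b_def by (rule Lam_K[OF dd_Sdual G, symmetric])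
  also have "Lam dd (\<lambda>n. E t n * b n) = gg t G" using G by (simp add: gg_def E_def b_def)
  finally show ?thesis using J by (simp add: AG_def cbox_interval)
qed

lemma th_solution: "is_solution \<beta> \<alpha> \<alpha>L \<alpha>R thL thR \<psi> lam \<theta>0 th"
proof -
  have A: "\<forall>t\<ge>0. th t \<in> Sdual \<psi> lam" using th_Sdual by blast
  have B: "\<forall>t\<ge>0. gg t \<in> Sdual \<psi> lam" using gg_Sdual by blast
  have C: "\<forall>G\<in>Sspace \<psi> lam. \<forall>t\<ge>0. th t G = hdl G + gg t G
       \<and> (\<lambda>s. gg s (opA \<psi> lam G)) integrable_on {0..t}
       \<and> gg t G = \<theta>0 G - hdl G + integral {0..t} (\<lambda>s. gg s (opA \<psi> lam G))"
  proof (intro ballI allI impI conjI)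
    fix G and t :: real assume G: "G \<in> Sspace \<psi> lam" and t: "t \<ge> 0"
    show "th t G = hdl G + gg t G" using G by (simp add: th_def)
    show "(\<lambda>s. gg s (opA \<psi> lam G)) integrable_on {0..t}" using gg_int[OF G t] by blast
    show "gg t G = \<theta>0 G - hdl G + integral {0..t} (\<lambda>s. gg s (opA \<psi> lam G))"
      using integral_unique[OF gg_int[OF G t]] G by (simp add: dd_def)
  qed
  show ?thesis unfolding is_solution_def using A B C by blast
qed

lemma th_diff_bound:
  assumes F: "F \<in> Sspace \<psi> lam" and t: "t \<ge> 0" and t0: "t0 \<ge> 0"
    and C: "C \<ge> 0" and bd: "\<And>F. F \<in> Sspace \<psi> lam \<Longrightarrow> \<bar>dd F\<bar> \<le> C * sqrt (nrm k (coef F))"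
  shows "\<bar>th t F - th t0 F\<bar> \<le> C * (\<bar>t - t0\<bar> * sqrt (nrm (k + 2) (coef F)))"
proof -
  define b where "b = coef F"
  have bs: "b \<in> Sseq" using F by (simp add: Sspace_iff b_def)
  define m where "m n = exp (- lam n * t) - exp (- lam n * t0)" for n
  have mb: "\<bar>m n\<bar> \<le> 2" for n
    using E_le1[OF t, of n] E_le1[OF t0, of n] unfolding m_def by linarith
  have ys: "(\<lambda>n. m n * b n) \<in> Sseq" by (rule Sseq_mult_bounded[OF bs mb])
  have "th t F - th t0 F = Lam dd (\<lambda>n. exp (- lam n * t) * b n) - Lam dd (\<lambda>n. exp (- lam n * t0) * b n)"
    using F by (simp add: th_def gg_def b_def)
  also have "\<dots> = Lam dd (\<lambda>n. 1 * (exp (- lam n * t) * b n) + (-1) * (exp (- lam n * t0) * b n))"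
    using Lam_lin[OF dd_Sdual Eseq[OF t bs] Eseq[OF t0 bs], of 1 "-1"] by simp
  also have "\<dots> = Lam dd (\<lambda>n. m n * b n)"
    by (rule arg_cong[where f="Lam dd"]) (auto simp: m_def algebra_simps)
  finally have eq: "th t F - th t0 F = Lam dd (\<lambda>n. m n * b n)" .
  have "nrm k (\<lambda>n. m n * b n) \<le> (\<Sum>n. (t - t0)^2 * (w (k + 2) n * (b n)^2))"
    unfolding nrm_def
  proof (rule suminf_le)
    fix n
    have "\<bar>m n\<bar> \<le> \<bar>lam n * t - lam n * t0\<bar>"
      using exp_diff_le[of "lam n * t" "lam n * t0"] lam_nonneg[of n] t t0 unfolding m_def
      by (simp add: mult_nonneg_nonneg)
    also have "\<dots> = lam n * \<bar>t - t0\<bar>" using lam_nonneg[of n] by (simp add: abs_mult right_diff_distrib[symmetric])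
    finally have "\<bar>m n\<bar>^2 \<le> (lam n * \<bar>t - t0\<bar>)^2" by (intro power_mono) auto
    then have m2: "(m n)^2 \<le> (lam n)^2 * (t - t0)^2" by (simp add: power_mult_distrib)
    have "w k n * (m n * b n)^2 = (w k n * (m n)^2) * (b n)^2" by (simp add: power_mult_distrib)
    also have "\<dots> \<le> (w k n * ((lam n)^2 * (t - t0)^2)) * (b n)^2"
      by (intro mult_right_mono mult_left_mono m2 w_nonneg) auto
    also have "\<dots> = (t - t0)^2 * ((w k n * (lam n)^2) * (b n)^2)" by (simp add: algebra_simps)
    also have "\<dots> \<le> (t - t0)^2 * ((w k n * w 2 n) * (b n)^2)"
      by (intro mult_left_mono mult_right_mono lam_sq_le w_nonneg) auto
    also have "\<dots> = (t - t0)^2 * (w (k + 2) n * (b n)^2)" by (simp add: w_add)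
    finally show "w k n * (m n * b n)^2 \<le> (t - t0)^2 * (w (k + 2) n * (b n)^2)" .
  next
    show "summable (\<lambda>n. w k n * (m n * b n)^2)" by (rule Sseq_summ[OF ys])
    show "summable (\<lambda>n. (t - t0)^2 * (w (k + 2) n * (b n)^2))" by (intro summable_mult Sseq_summ[OF bs])
  qed
  also have "\<dots> = (t - t0)^2 * nrm (k + 2) b"
    unfolding nrm_def by (rule suminf_mult[OF Sseq_summ[OF bs]])
  finally have n1: "nrm k (\<lambda>n. m n * b n) \<le> (t - t0)^2 * nrm (k + 2) b" .
  have "\<bar>th t F - th t0 F\<bar> \<le> C * sqrt (nrm k (\<lambda>n. m n * b n))"
    unfolding eq by (rule Lam_bound[OF dd_Sdual ys C bd])
  also have "\<dots> \<le> C * sqrt ((t - t0)^2 * nrm (k + 2) b)"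
    by (intro mult_left_mono C real_sqrt_le_mono n1)
  also have "\<dots> = C * (\<bar>t - t0\<bar> * sqrt (nrm (k + 2) b))"
    by (simp add: real_sqrt_mult)
  finally show ?thesis by (simp add: b_def)
qed

lemma th_cont: "strong_cont_path \<psi> lam th"
  unfolding strong_cont_path_def
proof (intro conjI allI impI)
  show "\<And>t::real. t \<ge> 0 \<Longrightarrow> th t \<in> Sdual \<psi> lam" by (rule th_Sdual)
  fix B :: "(real \<Rightarrow> real) set" and t0 e :: real
  assume Bb: "S_bounded \<psi> lam B" and t0: "t0 \<ge> 0" and e: "e > 0"
  obtain k C where C: "C \<ge> 0" and bd: "\<And>F. F \<in> Sspace \<psi> lam \<Longrightarrow> \<bar>dd F\<bar> \<le> C * sqrt (nrm k (coef F))"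
    using Sdual_bound[OF dd_Sdual] by blast
  have BS: "B \<subseteq> Sspace \<psi> lam" using Bb by (simp add: S_bounded_def)
  obtain M where M: "\<And>F. F \<in> B \<Longrightarrow> Snorm_sq \<psi> lam (k + 2) F \<le> M"
    using Bb unfolding S_bounded_def by blast
  define M' where "M' = max M 0"
  define K where "K = C * sqrt M'"
  have K: "K \<ge> 0" by (simp add: K_def C M'_def)
  define \<delta> where "\<delta> = e / (K + 1)"
  have \<delta>: "\<delta> > 0" using e K by (simp add: \<delta>_def)
  show "\<exists>\<delta>>0. \<forall>t\<ge>0. \<bar>t - t0\<bar> < \<delta> \<longrightarrow> (\<forall>F\<in>B. \<bar>th t F - th t0 F\<bar> < e)"
  proof (intro exI[of _ \<delta>] conjI \<delta> allI impI ballI)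
    fix t F assume t: "t \<ge> 0" and tt: "\<bar>t - t0\<bar> < \<delta>" and FB: "F \<in> B"
    have F: "F \<in> Sspace \<psi> lam" using BS FB by blast
    have "sqrt (nrm (k + 2) (coef F)) \<le> sqrt M'"
      using M[OF FB] by (intro real_sqrt_le_mono) (simp add: Snorm_eq M'_def)
    then have "\<bar>t - t0\<bar> * sqrt (nrm (k + 2) (coef F)) \<le> \<bar>t - t0\<bar> * sqrt M'"
      by (rule mult_left_mono) simp
    then have "C * (\<bar>t - t0\<bar> * sqrt (nrm (k + 2) (coef F))) \<le> C * (\<bar>t - t0\<bar> * sqrt M')"
      by (rule mult_left_mono[OF _ C])
    then have "\<bar>th t F - th t0 F\<bar> \<le> C * (\<bar>t - t0\<bar> * sqrt M')"
      using th_diff_bound[OF F t t0 C bd] by linarith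
    also have "\<dots> = K * \<bar>t - t0\<bar>" by (simp add: K_def)
    also have "\<dots> \<le> K * \<delta>" using tt K by (intro mult_left_mono) auto
    also have "\<dots> < e" using e K by (simp add: \<delta>_def field_simps)
    finally show "\<bar>th t F - th t0 F\<bar> < e" .
  qed
qed

lemma sol_psi:
  assumes S: "is_solution \<beta> \<alpha> \<alpha>L \<alpha>R thL thR \<psi> lam \<theta>0 \<theta>'"
  obtains g where "\<And>t. t \<ge> 0 \<Longrightarrow> g t \<in> Sdual \<psi> lam"
    "\<And>t G. t \<ge> 0 \<Longrightarrow> G \<in> Sspace \<psi> lam \<Longrightarrow> \<theta>' t G = hdl G + g t G"
    "\<And>t n. t \<ge> 0 \<Longrightarrow> g t (\<psi> n) = dd (\<psi> n) * exp (- lam n * t)"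
proof -
  have "\<exists>g. (\<forall>t\<ge>0. g t \<in> Sdual \<psi> lam)
        \<and> (\<forall>G\<in>Sspace \<psi> lam. \<forall>t\<ge>0. \<theta>' t G = hdl G + g t G
            \<and> (\<lambda>s. g s (opA \<psi> lam G)) integrable_on {0..t}
            \<and> g t G = \<theta>0 G - hdl G + integral {0..t} (\<lambda>s. g s (opA \<psi> lam G)))"
    using S unfolding is_solution_def by (rule conjunct2)
  then obtain g where gA: "\<forall>t\<ge>0. g t \<in> Sdual \<psi> lam"
    and gB: "\<forall>G\<in>Sspace \<psi> lam. \<forall>t\<ge>0. \<theta>' t G = hdl G + g t G
            \<and> (\<lambda>s. g s (opA \<psi> lam G)) integrable_on {0..t}
            \<and> g t G = \<theta>0 G - hdl G + integral {0..t} (\<lambda>s. g s (opA \<psi> lam G))"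
    by (elim exE conjE)
  have g1: "g t \<in> Sdual \<psi> lam" if "t \<ge> 0" for t using gA that by simp
  have g2: "\<theta>' t G = hdl G + g t G
            \<and> (\<lambda>s. g s (opA \<psi> lam G)) integrable_on {0..t}
            \<and> g t G = \<theta>0 G - hdl G + integral {0..t} (\<lambda>s. g s (opA \<psi> lam G))"
    if "G \<in> Sspace \<psi> lam" "t \<ge> 0" for G t
    using gB that by simp
  have psi_ode: "g t (\<psi> n) = dd (\<psi> n) * exp (- lam n * t)" if t: "t \<ge> 0" for t n
  proof -
    have A: "opA \<psi> lam (\<psi> n) \<in> Sspace \<psi> lam" "coef (opA \<psi> lam (\<psi> n)) = (\<lambda>m. - lam m * coef (\<psi> n) m)"
      using opA_prop[OF psi_Sspace] by auto
    have gA: "g s (opA \<psi> lam (\<psi> n)) = - lam n * g s (\<psi> n)" if s: "s \<ge> 0" for s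
    proof -
      have "g s (opA \<psi> lam (\<psi> n)) = Lam (g s) (coef (opA \<psi> lam (\<psi> n)))"
        by (rule Lam_K[OF g1[OF s] A(1)])
      also have "\<dots> = Lam (g s) (\<lambda>m. - lam m * coef (\<psi> n) m)" by (simp add: A(2))
      also have "\<dots> = (- lam n * coef (\<psi> n) n) * g s (\<psi> n)"
        by (rule Lam_single[OF g1[OF s]]) (simp add: coef_psi)
      finally show ?thesis by (simp add: coef_psi)
    qed
    have h: "(\<lambda>s. - lam n * g s (\<psi> n)) integrable_on {0..x} \<and>
        g x (\<psi> n) = dd (\<psi> n) + integral {0..x} (\<lambda>s. - lam n * g s (\<psi> n))" if x: "x \<ge> 0" for x
    proof -
      from g2[OF psi_Sspace x, of n] have
        i1: "(\<lambda>s. g s (opA \<psi> lam (\<psi> n))) integrable_on {0..x}" and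
        i2: "g x (\<psi> n) = \<theta>0 (\<psi> n) - hdl (\<psi> n) + integral {0..x} (\<lambda>s. g s (opA \<psi> lam (\<psi> n)))"
        by auto
      have cong: "\<And>s. s \<in> {0..x} \<Longrightarrow> g s (opA \<psi> lam (\<psi> n)) = - lam n * g s (\<psi> n)"
        using gA by auto
      have e1: "integral {0..x} (\<lambda>s. g s (opA \<psi> lam (\<psi> n))) = integral {0..x} (\<lambda>s. - lam n * g s (\<psi> n))"
        by (rule Henstock_Kurzweil_Integration.integral_cong[OF cong])
      have e2: "(\<lambda>s. - lam n * g s (\<psi> n)) integrable_on {0..x}"
        by (rule iffD1[OF Henstock_Kurzweil_Integration.integrable_cong[OF cong] i1])
      have e3: "dd (\<psi> n) = \<theta>0 (\<psi> n) - hdl (\<psi> n)" by (simp add: dd_def psi_Sspace)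
      show ?thesis using e2 i2 unfolding e1 e3 by simp
    qed
    show ?thesis by (rule ode_unique[OF h t])
  qed
  show ?thesis
  proof (rule that)
    show "\<And>t. t \<ge> 0 \<Longrightarrow> g t \<in> Sdual \<psi> lam" by (rule g1)
    show "\<And>t G. t \<ge> 0 \<Longrightarrow> G \<in> Sspace \<psi> lam \<Longrightarrow> \<theta>' t G = hdl G + g t G"
      using g2 by blast
    show "\<And>t n. t \<ge> 0 \<Longrightarrow> g t (\<psi> n) = dd (\<psi> n) * exp (- lam n * t)" by (rule psi_ode)
  qed
qed

lemma uniq:
  assumes S: "is_solution \<beta> \<alpha> \<alpha>L \<alpha>R thL thR \<psi> lam \<theta>0 \<theta>'"
    and t: "t \<ge> 0" and G: "G \<in> Sspace \<psi> lam"
  shows "\<theta>' t G = th t G"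
proof -
  obtain g where g1: "\<And>t. t \<ge> 0 \<Longrightarrow> g t \<in> Sdual \<psi> lam"
    and g2: "\<And>t G. t \<ge> 0 \<Longrightarrow> G \<in> Sspace \<psi> lam \<Longrightarrow> \<theta>' t G = hdl G + g t G"
    and g3: "\<And>t n. t \<ge> 0 \<Longrightarrow> g t (\<psi> n) = dd (\<psi> n) * exp (- lam n * t)"
    using sol_psi[OF S] by blast
  obtain g' where g1': "\<And>t. t \<ge> 0 \<Longrightarrow> g' t \<in> Sdual \<psi> lam"
    and g2': "\<And>t G. t \<ge> 0 \<Longrightarrow> G \<in> Sspace \<psi> lam \<Longrightarrow> th t G = hdl G + g' t G"
    and g3': "\<And>t n. t \<ge> 0 \<Longrightarrow> g' t (\<psi> n) = dd (\<psi> n) * exp (- lam n * t)"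
    using sol_psi[OF th_solution] by blast
  have "g t G = Lam (g t) (coef G)" by (rule Lam_K[OF g1[OF t] G])
  also have "\<dots> = Lam (g' t) (coef G)" by (rule Lam_same) (simp add: g3[OF t] g3'[OF t])
  also have "\<dots> = g' t G" by (rule Lam_K[OF g1'[OF t] G, symmetric])
  finally show ?thesis using g2[OF t G] g2'[OF t G] by simp
qed

end

theorem proposition3p2:
  fixes \<alpha> \<alpha>L \<alpha>R thL thR \<beta> :: real
    and \<psi> :: "nat \<Rightarrow> real \<Rightarrow> real" and lam :: "nat \<Rightarrow> real"
    and \<theta>0 :: "(real \<Rightarrow> real) \<Rightarrow> real"
  assumes "\<alpha> > 0" "\<alpha>L > 0" "\<alpha>R > 0" "thL > 0" "thR > 0" "\<beta> \<ge> 0"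
    and "is_eigenbasis \<beta> \<alpha> \<alpha>L \<alpha>R \<psi> lam"
    and "\<theta>0 \<in> Sdual \<psi> lam"
  shows "\<exists>\<theta>. is_solution \<beta> \<alpha> \<alpha>L \<alpha>R thL thR \<psi> lam \<theta>0 \<theta> \<and> strong_cont_path \<psi> lam \<theta>
           \<and> (\<forall>\<theta>'. is_solution \<beta> \<alpha> \<alpha>L \<alpha>R thL thR \<psi> lam \<theta>0 \<theta>' \<and> strong_cont_path \<psi> lam \<theta>'
                 \<longrightarrow> (\<forall>t\<ge>0. \<forall>G\<in>Sspace \<psi> lam. \<theta>' t G = \<theta> t G))"
proof -
  interpret S: sol \<beta> \<alpha> \<alpha>L \<alpha>R \<psi> lam thL thR \<theta>0
    by unfold_locales (use assms in auto)
  show ?thesis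
  proof (intro exI[of _ S.th] conjI allI impI ballI)
    show "is_solution \<beta> \<alpha> \<alpha>L \<alpha>R thL thR \<psi> lam \<theta>0 S.th" by (rule S.th_solution)
    show "strong_cont_path \<psi> lam S.th" by (rule S.th_cont)
    fix \<theta>' and t :: real and G
    assume h: "is_solution \<beta> \<alpha> \<alpha>L \<alpha>R thL thR \<psi> lam \<theta>0 \<theta>' \<and> strong_cont_path \<psi> lam \<theta>'"
      and t: "t \<ge> 0" and G: "G \<in> Sspace \<psi> lam"
    show "\<theta>' t G = S.th t G" using S.uniq[OF conjunct1[OF h] t G] .
  qed
qed

end
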